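(* Let $R=k\{x_1,\ldots,x_n;\,Q,\preceq\}$ be a PBW algebra, $M\subseteq R^s$ an $R$-subbimodule, and give $R^{\rm env}$ its PBW structure with one of the orders $\preceq^*$, $\preceq^c$, $\preceq_*$, $\preceq_c$ on $\mathbb{N}^{2n}$. If $G$ is a left Gröbner basis of the left $R^{\rm env}$-module $N_M=(\mathfrak m^s)^{-1}(M)\subseteq(R^{\rm env})^s$ with respect to TOP (resp. POT), then $\mathfrak m^s(G)\setminus\{0\}$ is a two-sided Gröbner basis of $M$ with respect to TOP (resp. POT) built from $\preceq$.
   Context: $k$ is a field; $x^\alpha=x_1^{\alpha_1}\cdots x_n^{\alpha_n}$. A PBW algebra $R=k\{x_1,\ldots,x_n;Q,\preceq\}$ is a quotient of $k\langle x_1,\ldots,x_n\rangle$ by the two-sided ideal generated by $Q=\{x_jx_i-q_{ji}x_ix_j-p_{ji};\,i<j\}$, $q_{ji}\in k^*$, each $p_{ji}$ a combination of standard monomials with exponents $\prec\epsilon_i+\epsilon_j$ for an admissible order $\preceq$ (total, compatible with addition, $0$ minimal), such that the standard monomials form a $k$-basis. $R^{\rm env}=R\otimes_kR^{\rm op}$ is the PBW algebra in the variables $x_1\otimes1,\ldots,x_n\otimes1,1\otimes x_n,\ldots,1\otimes x_1$ (in this order) with relations $(x_j\otimes1)(x_i\otimes1)-q_{ji}(x_i\otimes1)(x_j\otimes1)-p_{ji}\otimes1$, $(1\otimes x_j)(x_i\otimes1)-(x_i\otimes1)(1\otimes x_j)$, $(1\otimes x_i)(1\otimes x_j)-q_{ji}(1\otimes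 x_j)(1\otimes x_i)-1\otimes p_{ji}$; exponent $(\alpha,\beta)\in\mathbb N^{2n}$ corresponds to $x^\alpha\otimes x^{\beta^{\rm op}}$, $\beta^{\rm op}=(\beta_n,\ldots,\beta_1)$. With $\alpha\preceq^{\rm op}\beta$ iff $\alpha^{\rm op}\preceq\beta^{\rm op}$: $(\alpha,\beta)\prec^*(\gamma,\delta)$ iff $\beta\prec^{\rm op}\delta$ or ($\beta=\delta$, $\alpha\prec\gamma$); $(\alpha,\beta)\prec_*(\gamma,\delta)$ iff $\alpha\prec\gamma$ or ($\alpha=\gamma$, $\beta\prec^{\rm op}\delta$); $(\alpha,\beta)\prec^c(\gamma,\delta)$ iff $\alpha+\beta^{\rm op}\prec\gamma+\delta^{\rm op}$ or (equality and $\beta^{\rm op}\prec\delta^{\rm op}$); $(\alpha,\beta)\prec_c(\gamma,\delta)$ iff $\alpha+\beta^{\rm op}\prec\gamma+\delta^{\rm op}$ or (equality and $\alpha\prec\gamma$). For an admissible order $\le$ on $\mathbb N^m$, on $\mathbb N^{m,(s)}=\mathbb N^m\times\{1,\ldots,s\}$ TOP is: $(\alpha,i)<(\beta,j)$ iff $\alpha<\beta$, or $\alpha=\beta$ and $i>j$; POT is: $(\alpha,i)<(\beta,j)$ iff $i>j$, or $i=j$ and $\alpha<\beta$. For $A=R$ or $R^{\rm env}$ with standard basis $\mathbf e_i$ of $A^s$, a nonzero $\mathbf f=\sum c_{(\alpha,i)}x^\alpha\mathbf e_i$ has $\exp(\mathbf f)$ the largest $(\alpha,i)$ with nonzero coefficient;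 for $L\subseteq A^s$, $\mathrm{Exp}(L)=\{\exp(\mathbf f):0\ne\mathbf f\in L\}$; $(\alpha,i)+\mathbb N^m:=\{(\alpha+\gamma,i):\gamma\in\mathbb N^m\}$. A finite $G\subseteq L\setminus\{0\}$ is a left Gröbner basis of a left submodule $L\subseteq A^s$ if $L={}_A\langle G\rangle$ and $\mathrm{Exp}(L)=\bigcup_{\mathbf g\in G}(\exp(\mathbf g)+\mathbb N^m)$. A finite $G\subseteq M\setminus\{0\}$ is a two-sided Gröbner basis of an $R$-subbimodule $M\subseteq R^s$ if $M={}_R\langle G\rangle_R$ (sub-bimodule generated) and $\mathrm{Exp}(M)=\bigcup_{\mathbf g\in G}(\exp(\mathbf g)+\mathbb N^n)$. $R^s$ is a left $R^{\rm env}$-module via $(r\otimes r')\mathbf f=(rf_1r',\ldots,rf_sr')$; $\mathfrak m^s:(R^{\rm env})^s\to R^s$ applies $\mathfrak m(r\otimes r')=rr'$ coordinatewise. *)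

theory Defs
  imports Main
begin

(* Exponents in N^n are lists of length n (index 0 .. n-1 plays the role of 1 .. n). *)
definition Ex :: "nat \<Rightarrow> nat list set" where
  "Ex n = {\<alpha>. length \<alpha> = n}"

definition addE :: "nat list \<Rightarrow> nat list \<Rightarrow> nat list" where
  "addE \<alpha> \<beta> = map2 (+) \<alpha> \<beta>"

definition eps :: "nat \<Rightarrow> nat \<Rightarrow> nat list" where
  "eps n i = (replicate n 0)[i := 1]"

definition admissible :: "nat \<Rightarrow> (nat list \<Rightarrow> nat list \<Rightarrow> bool) \<Rightarrow> bool" where
  "admissible n le \<longleftrightarrow>
     (\<forall>\<alpha>\<in>Ex n. le \<alpha> \<alpha>) \<and>
     (\<forall>\<alpha>\<in>Ex n. \<forall>\<beta>\<in>Ex n. le \<alpha> \<beta> \<and> le \<beta> \<alpha> \<longrightarrow> \<alpha> = \<beta>) \<and>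
     (\<forall>\<alpha>\<in>Ex n. \<forall>\<beta>\<in>Ex n. \<forall>\<gamma>\<in>Ex n. le \<alpha> \<beta> \<and> le \<beta> \<gamma> \<longrightarrow> le \<alpha> \<gamma>) \<and>
     (\<forall>\<alpha>\<in>Ex n. \<forall>\<beta>\<in>Ex n. le \<alpha> \<beta> \<or> le \<beta> \<alpha>) \<and>
     (\<forall>\<alpha>\<in>Ex n. \<forall>\<beta>\<in>Ex n. \<forall>\<gamma>\<in>Ex n. le \<alpha> \<beta> \<longrightarrow> le (addE \<alpha> \<gamma>) (addE \<beta> \<gamma>)) \<and>
     (\<forall>\<alpha>\<in>Ex n. le (replicate n 0) \<alpha>)"

definition strict :: "('e \<Rightarrow> 'e \<Rightarrow> bool) \<Rightarrow> 'e \<Rightarrow> 'e \<Rightarrow> bool" where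
  "strict le a b \<longleftrightarrow> le a b \<and> a \<noteq> b"

definition k_algebra :: "('k::field \<Rightarrow> 'r::ring_1) \<Rightarrow> bool" where
  "k_algebra sc \<longleftrightarrow> sc 1 = 1 \<and> (\<forall>a b. sc (a + b) = sc a + sc b) \<and>
     (\<forall>a b. sc (a * b) = sc a * sc b) \<and> (\<forall>a r. sc a * r = r * sc a)"

definition mon :: "(nat \<Rightarrow> 'r::ring_1) \<Rightarrow> nat \<Rightarrow> nat list \<Rightarrow> 'r" where
  "mon x n \<alpha> = prod_list (map (\<lambda>i. x i ^ (\<alpha> ! i)) [0..<n])"

definition fsupp :: "nat \<Rightarrow> (nat list \<Rightarrow> 'k::zero) \<Rightarrow> bool" where
  "fsupp n c \<longleftrightarrow> finite {\<alpha>. c \<alpha> \<noteq> 0} \<and> (\<forall>\<alpha>. c \<alpha> \<noteq> 0 \<longrightarrow> length \<alpha> = n)"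

definition lin :: "('k::field \<Rightarrow> 'r::ring_1) \<Rightarrow> (nat \<Rightarrow> 'r) \<Rightarrow> nat \<Rightarrow> (nat list \<Rightarrow> 'k) \<Rightarrow> 'r" where
  "lin sc x n c = (\<Sum>\<alpha>\<in>{\<alpha>. c \<alpha> \<noteq> 0}. sc (c \<alpha>) * mon x n \<alpha>)"

(* R is the PBW algebra k{x_1,...,x_n; Q, le}: generated by x with relations Q,
   standard monomials forming a k-basis *)
definition pbw :: "('k::field \<Rightarrow> 'r::ring_1) \<Rightarrow> (nat \<Rightarrow> 'r) \<Rightarrow> nat \<Rightarrow>
                   (nat list \<Rightarrow> nat list \<Rightarrow> bool) \<Rightarrow> bool" where
  "pbw sc x n le \<longleftrightarrow>
     k_algebra sc \<and> admissible n le \<and>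
     (\<forall>i j. i < j \<and> j < n \<longrightarrow>
        (\<exists>q p. q \<noteq> 0 \<and> fsupp n p \<and>
           (\<forall>\<alpha>. p \<alpha> \<noteq> 0 \<longrightarrow> strict le \<alpha> (addE (eps n i) (eps n j))) \<and>
           x j * x i = sc q * x i * x j + lin sc x n p)) \<and>
     (\<forall>r. \<exists>!c. fsupp n c \<and> r = lin sc x n c)"

definition cf :: "('k::field \<Rightarrow> 'r::ring_1) \<Rightarrow> (nat \<Rightarrow> 'r) \<Rightarrow> nat \<Rightarrow> 'r \<Rightarrow> nat list \<Rightarrow> 'k" where
  "cf sc x n r = (THE c. fsupp n c \<and> r = lin sc x n c)"

(* TOP and POT orders on N^{m,(s)} (strict versions); components indexed from 0 *)
definition TOP :: "('e \<Rightarrow> 'e \<Rightarrow> bool) \<Rightarrow> ('e \<times> nat) \<Rightarrow> ('e \<times> nat) \<Rightarrow> bool" where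
  "TOP lt a b \<longleftrightarrow> lt (fst a) (fst b) \<or> (fst a = fst b \<and> snd a > snd b)"

definition POT :: "('e \<Rightarrow> 'e \<Rightarrow> bool) \<Rightarrow> ('e \<times> nat) \<Rightarrow> ('e \<times> nat) \<Rightarrow> bool" where
  "POT lt a b \<longleftrightarrow> snd a > snd b \<or> (snd a = snd b \<and> lt (fst a) (fst b))"

definition modord :: "bool \<Rightarrow> ('e \<Rightarrow> 'e \<Rightarrow> bool) \<Rightarrow> ('e \<times> nat) \<Rightarrow> ('e \<times> nat) \<Rightarrow> bool" where
  "modord istop lt = (if istop then TOP lt else POT lt)"

definition supp_vec :: "('v \<Rightarrow> 'e \<Rightarrow> 'k::zero) \<Rightarrow> nat \<Rightarrow> (nat \<Rightarrow> 'v) \<Rightarrow> ('e \<times> nat) set" where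
  "supp_vec coef s f = {(e, i). i < s \<and> coef (f i) e \<noteq> 0}"

definition lead :: "('a \<Rightarrow> 'a \<Rightarrow> bool) \<Rightarrow> 'a set \<Rightarrow> 'a" where
  "lead lt S = (THE e. e \<in> S \<and> (\<forall>e'\<in>S. e' \<noteq> e \<longrightarrow> lt e' e))"

definition expv :: "('v \<Rightarrow> 'e \<Rightarrow> 'k::zero) \<Rightarrow> ('e \<times> nat \<Rightarrow> 'e \<times> nat \<Rightarrow> bool) \<Rightarrow> nat \<Rightarrow>
                    (nat \<Rightarrow> 'v) \<Rightarrow> 'e \<times> nat" where
  "expv coef lt s f = lead lt (supp_vec coef s f)"

definition ExpSet :: "('v \<Rightarrow> 'e \<Rightarrow> 'k::zero) \<Rightarrow> ('e \<times> nat \<Rightarrow> 'e \<times> nat \<Rightarrow> bool) \<Rightarrow> nat \<Rightarrow>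
                      (nat \<Rightarrow> 'v) \<Rightarrow> (nat \<Rightarrow> 'v) set \<Rightarrow> ('e \<times> nat) set" where
  "ExpSet coef lt s z L = {expv coef lt s f | f. f \<in> L \<and> f \<noteq> z}"

definition cone :: "('e \<Rightarrow> 'e \<Rightarrow> 'e) \<Rightarrow> 'e set \<Rightarrow> 'e \<times> nat \<Rightarrow> ('e \<times> nat) set" where
  "cone add \<Gamma> a = {(add (fst a) \<gamma>, snd a) | \<gamma>. \<gamma> \<in> \<Gamma>}"

definition vecs :: "nat \<Rightarrow> (nat \<Rightarrow> 'r::ring_1) set" where
  "vecs s = {f. \<forall>i\<ge>s. f i = 0}"

definition subbimodule :: "nat \<Rightarrow> (nat \<Rightarrow> 'r::ring_1) set \<Rightarrow> bool" where
  "subbimodule s M \<longleftrightarrow> M \<subseteq> vecs s \<and> (\<lambda>_. 0) \<in> M \<and>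
     (\<forall>f\<in>M. \<forall>g\<in>M. (\<lambda>i. f i + g i) \<in> M) \<and>
     (\<forall>f\<in>M. \<forall>a b. (\<lambda>i. a * f i * b) \<in> M)"

definition bispan :: "(nat \<Rightarrow> 'r::ring_1) set \<Rightarrow> (nat \<Rightarrow> 'r) set" where
  "bispan G = {f. \<exists>ts. (\<forall>t\<in>set ts. fst (snd t) \<in> G) \<and>
                   f = (\<lambda>i. \<Sum>t\<leftarrow>ts. fst t * fst (snd t) i * snd (snd t))}"

definition two_sided_gb :: "('k::field \<Rightarrow> 'r::ring_1) \<Rightarrow> (nat \<Rightarrow> 'r) \<Rightarrow> nat \<Rightarrow> nat \<Rightarrow>
     (nat list \<times> nat \<Rightarrow> nat list \<times> nat \<Rightarrow> bool) \<Rightarrow> (nat \<Rightarrow> 'r) set \<Rightarrow> (nat \<Rightarrow> 'r) set \<Rightarrow> bool" where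
  "two_sided_gb sc x n s lt M G \<longleftrightarrow>
     finite G \<and> G \<subseteq> M - {\<lambda>_. 0} \<and> M = bispan G \<and>
     ExpSet (cf sc x n) lt s (\<lambda>_. 0) M = (\<Union>g\<in>G. cone addE (Ex n) (expv (cf sc x n) lt s g))"

(* ---------- R^env = R \<otimes> R^op ----------
   An element is a finitely supported coefficient function c on N^{2n} = N^n x N^n,
   standing for  sum c(alpha,beta) x^alpha \<otimes> x^(beta^op),  beta^op = rev beta. *)

definition envc :: "nat \<Rightarrow> (nat list \<times> nat list \<Rightarrow> 'k::zero) set" where
  "envc n = {c. finite {p. c p \<noteq> 0} \<and> (\<forall>p. c p \<noteq> 0 \<longrightarrow> length (fst p) = n \<and> length (snd p) = n)}"

definition addE2 :: "nat list \<times> nat list \<Rightarrow> nat list \<times> nat list \<Rightarrow> nat list \<times> nat list" where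
  "addE2 a b = (addE (fst a) (fst b), addE (snd a) (snd b))"

(* product in R \<otimes> R^op: (a \<otimes> b)(c \<otimes> d) = ac \<otimes> db *)
definition env_mult :: "('k::field \<Rightarrow> 'r::ring_1) \<Rightarrow> (nat \<Rightarrow> 'r) \<Rightarrow> nat \<Rightarrow>
     (nat list \<times> nat list \<Rightarrow> 'k) \<Rightarrow> (nat list \<times> nat list \<Rightarrow> 'k) \<Rightarrow> (nat list \<times> nat list \<Rightarrow> 'k)" where
  "env_mult sc x n c d = (\<lambda>(\<mu>, \<nu>). \<Sum>p\<in>{p. c p \<noteq> 0}. \<Sum>q\<in>{q. d q \<noteq> 0}.
      c p * d q * cf sc x n (mon x n (fst p) * mon x n (fst q)) \<mu>
            * cf sc x n (mon x n (rev (snd q)) * mon x n (rev (snd p))) (rev \<nu>))"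

definition envvecs :: "nat \<Rightarrow> nat \<Rightarrow> (nat \<Rightarrow> (nat list \<times> nat list \<Rightarrow> 'k::zero)) set" where
  "envvecs n s = {F. (\<forall>i<s. F i \<in> envc n) \<and> (\<forall>i\<ge>s. F i = (\<lambda>_. 0))}"

definition lspan :: "('k::field \<Rightarrow> 'r::ring_1) \<Rightarrow> (nat \<Rightarrow> 'r) \<Rightarrow> nat \<Rightarrow>
     (nat \<Rightarrow> (nat list \<times> nat list \<Rightarrow> 'k)) set \<Rightarrow> (nat \<Rightarrow> (nat list \<times> nat list \<Rightarrow> 'k)) set" where
  "lspan sc x n G = {F. \<exists>h. (\<forall>g\<in>G. h g \<in> envc n) \<and>
        F = (\<lambda>i p. \<Sum>g\<in>G. env_mult sc x n (h g) (g i) p)}"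

definition menv :: "('k::field \<Rightarrow> 'r::ring_1) \<Rightarrow> (nat \<Rightarrow> 'r) \<Rightarrow> nat \<Rightarrow> (nat list \<times> nat list \<Rightarrow> 'k) \<Rightarrow> 'r" where
  "menv sc x n c = (\<Sum>p\<in>{p. c p \<noteq> 0}. sc (c p) * mon x n (fst p) * mon x n (rev (snd p)))"

definition ms :: "('k::field \<Rightarrow> 'r::ring_1) \<Rightarrow> (nat \<Rightarrow> 'r) \<Rightarrow> nat \<Rightarrow>
     (nat \<Rightarrow> (nat list \<times> nat list \<Rightarrow> 'k)) \<Rightarrow> (nat \<Rightarrow> 'r)" where
  "ms sc x n F = (\<lambda>i. menv sc x n (F i))"

definition NM :: "('k::field \<Rightarrow> 'r::ring_1) \<Rightarrow> (nat \<Rightarrow> 'r) \<Rightarrow> nat \<Rightarrow> nat \<Rightarrow> (nat \<Rightarrow> 'r) set \<Rightarrow>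
     (nat \<Rightarrow> (nat list \<times> nat list \<Rightarrow> 'k)) set" where
  "NM sc x n s M = {F \<in> envvecs n s. ms sc x n F \<in> M}"

definition left_gb :: "('k::field \<Rightarrow> 'r::ring_1) \<Rightarrow> (nat \<Rightarrow> 'r) \<Rightarrow> nat \<Rightarrow> nat \<Rightarrow>
     ((nat list \<times> nat list) \<times> nat \<Rightarrow> (nat list \<times> nat list) \<times> nat \<Rightarrow> bool) \<Rightarrow>
     (nat \<Rightarrow> (nat list \<times> nat list \<Rightarrow> 'k)) set \<Rightarrow> (nat \<Rightarrow> (nat list \<times> nat list \<Rightarrow> 'k)) set \<Rightarrow> bool" where
  "left_gb sc x n s lt L G \<longleftrightarrow>
     finite G \<and> G \<subseteq> L - {\<lambda>_ _. 0} \<and> L = lspan sc x n G \<and>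
     ExpSet (\<lambda>c. c) lt s (\<lambda>_ _. 0) L = (\<Union>g\<in>G. cone addE2 (Ex n \<times> Ex n) (expv (\<lambda>c. c) lt s g))"

(* orders on N^{2n} built from a strict order lt on N^n; lt^op a b = lt (rev a) (rev b) *)
definition ord_star_up :: "(nat list \<Rightarrow> nat list \<Rightarrow> bool) \<Rightarrow> nat list \<times> nat list \<Rightarrow> nat list \<times> nat list \<Rightarrow> bool" where
  "ord_star_up lt a b \<longleftrightarrow> lt (rev (snd a)) (rev (snd b)) \<or> (snd a = snd b \<and> lt (fst a) (fst b))"

definition ord_star_low :: "(nat list \<Rightarrow> nat list \<Rightarrow> bool) \<Rightarrow> nat list \<times> nat list \<Rightarrow> nat list \<times> nat list \<Rightarrow> bool" where
  "ord_star_low lt a b \<longleftrightarrow> lt (fst a) (fst b) \<or> (fst a = fst b \<and> lt (rev (snd a)) (rev (snd b)))"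

definition ord_c_up :: "(nat list \<Rightarrow> nat list \<Rightarrow> bool) \<Rightarrow> nat list \<times> nat list \<Rightarrow> nat list \<times> nat list \<Rightarrow> bool" where
  "ord_c_up lt a b \<longleftrightarrow> lt (addE (fst a) (rev (snd a))) (addE (fst b) (rev (snd b))) \<or>
     (addE (fst a) (rev (snd a)) = addE (fst b) (rev (snd b)) \<and> lt (rev (snd a)) (rev (snd b)))"

definition ord_c_low :: "(nat list \<Rightarrow> nat list \<Rightarrow> bool) \<Rightarrow> nat list \<times> nat list \<Rightarrow> nat list \<times> nat list \<Rightarrow> bool" where
  "ord_c_low lt a b \<longleftrightarrow> lt (addE (fst a) (rev (snd a))) (addE (fst b) (rev (snd b))) \<or>
     (addE (fst a) (rev (snd a)) = addE (fst b) (rev (snd b)) \<and> lt (fst a) (fst b))"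

end

theory Submission
  imports Defs
begin

definition minfrom :: "(nat \<Rightarrow> nat) \<Rightarrow> nat \<Rightarrow> nat" where
  "minfrom s k = (LEAST v. \<exists>j\<ge>k. s j = v)"

definition pickfrom :: "(nat \<Rightarrow> nat) \<Rightarrow> nat \<Rightarrow> nat" where
  "pickfrom s k = (LEAST j. k \<le> j \<and> s j = minfrom s k)"

primrec subseqm :: "(nat \<Rightarrow> nat) \<Rightarrow> nat \<Rightarrow> nat" where
  "subseqm s 0 = pickfrom s 0"
| "subseqm s (Suc i) = pickfrom s (Suc (subseqm s i))"

lemma minfrom_ex: "\<exists>j\<ge>k. s j = minfrom s k"
  unfolding minfrom_def by (rule LeastI[of _ "s k"]) auto

lemma pickfrom_prop: "k \<le> pickfrom s k \<and> s (pickfrom s k) = minfrom s k"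
proof -
  obtain j where "k \<le> j \<and> s j = minfrom s k" using minfrom_ex by blast
  then show ?thesis unfolding pickfrom_def by (rule LeastI)
qed

lemma minfrom_mono: "k \<le> k' \<Longrightarrow> minfrom s k \<le> minfrom s k'"
proof -
  assume "k \<le> k'"
  obtain j where j: "j \<ge> k'" "s j = minfrom s k'" using minfrom_ex by blast
  then have "\<exists>j'\<ge>k. s j' = minfrom s k'" using \<open>k \<le> k'\<close> by (intro exI[of _ j]) auto
  then show ?thesis unfolding minfrom_def[of s k] by (rule Least_le[of "\<lambda>v. \<exists>j\<ge>k. s j = v"])
qed

lemma nat_seq_monosub:
  fixes s :: "nat \<Rightarrow> nat"
  shows "\<exists>\<phi>. strict_mono \<phi> \<and> (\<forall>k l::nat. k \<le> l \<longrightarrow> s (\<phi> k) \<le> s (\<phi> l))"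
proof (intro exI[where x="subseqm s"] conjI)
  have step: "subseqm s i < subseqm s (Suc i)" for i
    using pickfrom_prop[of "Suc (subseqm s i)" s] by simp
  then show "strict_mono (subseqm s)" by (simp add: strict_mono_Suc_iff)
  have val: "\<exists>k\<le>subseqm s i. s (subseqm s i) = minfrom s k" for i
    by (cases i) (use pickfrom_prop in auto)
  have st: "s (subseqm s i) \<le> s (subseqm s (Suc i))" for i
  proof -
    obtain k where k: "k \<le> subseqm s i" "s (subseqm s i) = minfrom s k" using val by blast
    have "minfrom s k \<le> minfrom s (Suc (subseqm s i))" using k(1) by (intro minfrom_mono) simp
    then show ?thesis using k(2) pickfrom_prop[of "Suc (subseqm s i)" s] by simp
  qed
  show "\<forall>k l. k \<le> l \<longrightarrow> s (subseqm s k) \<le> s (subseqm s l)"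
  proof (intro allI impI)
    fix k l :: nat assume "k \<le> l"
    then show "s (subseqm s k) \<le> s (subseqm s l)"
    proof (induction l)
      case 0 then show ?case by simp
    next
      case (Suc l) then show ?case using st[of l] by (cases "k = Suc l") (auto simp: le_Suc_eq)
    qed
  qed
qed

lemma dickson:
  "\<forall>f::nat \<Rightarrow> nat list. (\<forall>k. length (f k) = n) \<longrightarrow>
     (\<exists>\<phi>. strict_mono \<phi> \<and> (\<forall>k l::nat. k \<le> l \<longrightarrow> (\<forall>i<n. f (\<phi> k) ! i \<le> f (\<phi> l) ! i)))"
proof (induction n)
  case 0
  show ?case
  proof (intro allI impI)
    fix f :: "nat \<Rightarrow> nat list"
    show "\<exists>\<phi>. strict_mono \<phi> \<and> (\<forall>k l::nat. k \<le> l \<longrightarrow> (\<forall>i<0. f (\<phi> k) ! i \<le> f (\<phi> l) ! i))"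
      by (rule exI[where x="\<lambda>x::nat. x"]) (simp add: strict_mono_def)
  qed
next
  case (Suc n)
  show ?case
  proof (intro allI impI)
    fix f :: "nat \<Rightarrow> nat list" assume len: "\<forall>k. length (f k) = Suc n"
    have "\<forall>k. length (tl (f k)) = n" using len by simp
    then obtain \<phi>1 where sm1: "strict_mono \<phi>1" and m1: "\<forall>k l::nat. k \<le> l \<longrightarrow> (\<forall>i<n. tl (f (\<phi>1 k)) ! i \<le> tl (f (\<phi>1 l)) ! i)"
      using Suc.IH[rule_format, of "\<lambda>k. tl (f k)"] by blast
    obtain \<phi>2 where sm2: "strict_mono \<phi>2" and m2: "\<forall>k l::nat. k \<le> l \<longrightarrow> hd (f (\<phi>1 (\<phi>2 k))) \<le> hd (f (\<phi>1 (\<phi>2 l)))"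
      using nat_seq_monosub[of "\<lambda>k. hd (f (\<phi>1 k))"] by blast
    have sm: "strict_mono (\<phi>1 \<circ> \<phi>2)" using sm1 sm2 by (simp add: strict_mono_def)
    have "\<forall>k l::nat. k \<le> l \<longrightarrow> (\<forall>i<Suc n. f (\<phi>1 (\<phi>2 k)) ! i \<le> f (\<phi>1 (\<phi>2 l)) ! i)"
    proof (intro allI impI)
      fix k l i :: nat assume kl: "k \<le> l" and i: "i < Suc n"
      have kl2: "\<phi>2 k \<le> \<phi>2 l" using sm2 kl by (simp add: strict_mono_less_eq)
      obtain a as where fa: "f (\<phi>1 (\<phi>2 k)) = a # as" using len[rule_format, of "\<phi>1 (\<phi>2 k)"] by (cases "f (\<phi>1 (\<phi>2 k))") auto
      obtain b bs where fb: "f (\<phi>1 (\<phi>2 l)) = b # bs" using len[rule_format, of "\<phi>1 (\<phi>2 l)"] by (cases "f (\<phi>1 (\<phi>2 l))") auto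
      show "f (\<phi>1 (\<phi>2 k)) ! i \<le> f (\<phi>1 (\<phi>2 l)) ! i"
      proof (cases i)
        case 0
        have "hd (f (\<phi>1 (\<phi>2 k))) \<le> hd (f (\<phi>1 (\<phi>2 l)))" using m2 kl by blast
        then show ?thesis using fa fb 0 by simp
      next
        case (Suc j)
        have "j < n" using i Suc by simp
        then have "tl (f (\<phi>1 (\<phi>2 k))) ! j \<le> tl (f (\<phi>1 (\<phi>2 l))) ! j" using m1 kl2 by blast
        then show ?thesis using fa fb Suc by simp
      qed
    qed
    then show "\<exists>\<phi>. strict_mono \<phi> \<and> (\<forall>k l::nat. k \<le> l \<longrightarrow> (\<forall>i<Suc n. f (\<phi> k) ! i \<le> f (\<phi> l) ! i))"
      using sm by (intro exI[where x="\<phi>1 \<circ> \<phi>2"]) auto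
  qed
qed

lemma Ex_iff[simp]: "\<alpha> \<in> Ex n \<longleftrightarrow> length \<alpha> = n"
  by (simp add: Ex_def)

lemma addE_length[simp]: "length (addE a b) = min (length a) (length b)"
  by (simp add: addE_def)

lemma addE_nth[simp]: "i < length a \<Longrightarrow> i < length b \<Longrightarrow> addE a b ! i = a ! i + b ! i"
  by (simp add: addE_def)

lemma addE_comm: "addE a b = addE b a"
  by (rule nth_equalityI) auto

lemma addE_assoc: "addE (addE a b) c = addE a (addE b c)"
  by (rule nth_equalityI) auto

lemma addE_zero_left[simp]: "length a = n \<Longrightarrow> addE (replicate n 0) a = a"
  by (rule nth_equalityI) auto

lemma addE_zero_right[simp]: "length a = n \<Longrightarrow> addE a (replicate n 0) = a"
  by (rule nth_equalityI) auto

lemma addE_cancel: "length a = length c \<Longrightarrow> length b = length c \<Longrightarrow> addE a c = addE b c \<Longrightarrow> a = b"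
proof (rule nth_equalityI)
  assume l: "length a = length c" "length b = length c" and e: "addE a c = addE b c"
  show "length a = length b" using l by simp
  fix i assume "i < length a"
  then have "addE a c ! i = addE b c ! i" using e by simp
  then show "a ! i = b ! i" using l \<open>i < length a\<close> by simp
qed

lemma addE_cancel_left: "length a = length c \<Longrightarrow> length b = length c \<Longrightarrow> addE c a = addE c b \<Longrightarrow> a = b"
  using addE_cancel addE_comm by metis

lemma rev_addE: "length a = length b \<Longrightarrow> rev (addE a b) = addE (rev a) (rev b)"
  by (rule nth_equalityI) (auto simp: rev_nth)

lemma rev_replicate0[simp]: "rev (replicate n (0::nat)) = replicate n 0"
  by simp

locale adm =
  fixes n :: nat and le :: "nat list \<Rightarrow> nat list \<Rightarrow> bool"
  assumes adm: "admissible n le"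
begin

lemma adm_c: "(\<forall>\<alpha>\<in>Ex n. le \<alpha> \<alpha>) \<and>
     (\<forall>\<alpha>\<in>Ex n. \<forall>\<beta>\<in>Ex n. le \<alpha> \<beta> \<and> le \<beta> \<alpha> \<longrightarrow> \<alpha> = \<beta>) \<and>
     (\<forall>\<alpha>\<in>Ex n. \<forall>\<beta>\<in>Ex n. \<forall>\<gamma>\<in>Ex n. le \<alpha> \<beta> \<and> le \<beta> \<gamma> \<longrightarrow> le \<alpha> \<gamma>) \<and>
     (\<forall>\<alpha>\<in>Ex n. \<forall>\<beta>\<in>Ex n. le \<alpha> \<beta> \<or> le \<beta> \<alpha>) \<and>
     (\<forall>\<alpha>\<in>Ex n. \<forall>\<beta>\<in>Ex n. \<forall>\<gamma>\<in>Ex n. le \<alpha> \<beta> \<longrightarrow> le (addE \<alpha> \<gamma>) (addE \<beta> \<gamma>)) \<and>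
     (\<forall>\<alpha>\<in>Ex n. le (replicate n 0) \<alpha>)"
  using adm unfolding admissible_def .

lemma lrefl: "length a = n \<Longrightarrow> le a a"
  using conjunct1[OF adm_c, rule_format, of a] by simp
lemma lantisym: "length a = n \<Longrightarrow> length b = n \<Longrightarrow> le a b \<Longrightarrow> le b a \<Longrightarrow> a = b"
  using conjunct1[OF conjunct2[OF adm_c], rule_format, of a b] by simp
lemma ltrans: "length a = n \<Longrightarrow> length b = n \<Longrightarrow> length c = n \<Longrightarrow> le a b \<Longrightarrow> le b c \<Longrightarrow> le a c"
  using conjunct1[OF conjunct2[OF conjunct2[OF adm_c]], rule_format, of a b c] by simp
lemma ltotal: "length a = n \<Longrightarrow> length b = n \<Longrightarrow> le a b \<or> le b a"
  using conjunct1[OF conjunct2[OF conjunct2[OF conjunct2[OF adm_c]]], rule_format, of a b] by simp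
lemma lmono: "length a = n \<Longrightarrow> length b = n \<Longrightarrow> length c = n \<Longrightarrow> le a b \<Longrightarrow> le (addE a c) (addE b c)"
  using conjunct1[OF conjunct2[OF conjunct2[OF conjunct2[OF conjunct2[OF adm_c]]]], rule_format, of a b c] by simp
lemma zero_min: "length a = n \<Longrightarrow> le (replicate n 0) a"
  using conjunct2[OF conjunct2[OF conjunct2[OF conjunct2[OF conjunct2[OF adm_c]]]], rule_format, of a] by simp

lemma mono_left: "length a = n \<Longrightarrow> length b = n \<Longrightarrow> length c = n \<Longrightarrow> le a b \<Longrightarrow> le (addE c a) (addE c b)"
  using lmono[of a b c] by (simp add: addE_comm)

lemma smono: assumes "length a = n" "length b = n" "length c = n" "strict le a b"
  shows "strict le (addE a c) (addE b c)"
proof -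
  have "le (addE a c) (addE b c)" using lmono assms unfolding strict_def by blast
  moreover have "addE a c \<noteq> addE b c"
  proof
    assume "addE a c = addE b c"
    then have "a = b" using addE_cancel[of a c b] assms(1-3) by simp
    then show False using assms(4) unfolding strict_def by simp
  qed
  ultimately show ?thesis unfolding strict_def by simp
qed

lemma smono_left: "length a = n \<Longrightarrow> length b = n \<Longrightarrow> length c = n \<Longrightarrow> strict le a b \<Longrightarrow> strict le (addE c a) (addE c b)"
  using smono[of a b c] by (simp add: addE_comm)

lemma le_trans_strict:
  assumes "length a = n" "length b = n" "length c = n" "le a b" "le b c" "a \<noteq> b \<or> b \<noteq> c"
  shows "strict le a c"
proof -
  have "le a c" using ltrans assms by blast
  moreover have "a \<noteq> c"
  proof
    assume "a = c"
    then have "a = b" using lantisym assms by simp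
    then show False using assms \<open>a = c\<close> by simp
  qed
  ultimately show ?thesis unfolding strict_def by simp
qed

lemma strans: "length a = n \<Longrightarrow> length b = n \<Longrightarrow> length c = n \<Longrightarrow> strict le a b \<Longrightarrow> strict le b c \<Longrightarrow> strict le a c"
  unfolding strict_def[of le a b] strict_def[of le b c] using le_trans_strict by blast

lemma le_strans: "length a = n \<Longrightarrow> length b = n \<Longrightarrow> length c = n \<Longrightarrow> le a b \<Longrightarrow> strict le b c \<Longrightarrow> strict le a c"
  unfolding strict_def[of le b c] using le_trans_strict by blast

lemma strans_le: "length a = n \<Longrightarrow> length b = n \<Longrightarrow> length c = n \<Longrightarrow> strict le a b \<Longrightarrow> le b c \<Longrightarrow> strict le a c"
  unfolding strict_def[of le a b] using le_trans_strict by blast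

lemma not_strict_zero: assumes "length a = n" shows "\<not> strict le a (replicate n 0)"
proof
  assume "strict le a (replicate n 0)"
  then have "le a (replicate n 0)" "a \<noteq> replicate n 0" unfolding strict_def by auto
  moreover have "le (replicate n 0) a" using zero_min assms by simp
  ultimately show False using lantisym[of a "replicate n 0"] assms by simp
qed

lemma strict_asym: assumes "length a = n" "length b = n" "strict le a b" shows "\<not> strict le b a"
proof
  assume "strict le b a"
  then show False using assms lantisym unfolding strict_def by blast
qed

lemma strict_total: "length a = n \<Longrightarrow> length b = n \<Longrightarrow> strict le a b \<or> a = b \<or> strict le b a"
  unfolding strict_def using ltotal by blast

lemma le_iff_not_strict: assumes "length a = n" "length b = n" shows "le a b \<longleftrightarrow> \<not> strict le b a"
proof
  assume "le a b"
  then show "\<not> strict le b a" using strict_asym assms unfolding strict_def[of le a b] strict_def[of le b a] using lantisym by blast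
next
  assume "\<not> strict le b a"
  then show "le a b" using ltotal[OF assms] lrefl assms unfolding strict_def by auto
qed


lemma le_addE: assumes "length a = n" "length d = n" shows "le a (addE a d)"
proof -
  have "le (replicate n 0) d" using assms(2) by (rule zero_min)
  then have "le (addE (replicate n 0) a) (addE d a)" using assms by (intro lmono) simp_all
  then show ?thesis using assms(1) by (simp add: addE_comm)
qed

lemma compw_le:
  assumes "length a = n" "length b = n" "\<forall>i<n. a ! i \<le> b ! i"
  shows "le a b"
proof -
  define d where "d = map2 (-) b a"
  have ld: "length d = n" using assms by (simp add: d_def)
  have "b = addE a d"
    by (rule nth_equalityI) (use assms in \<open>auto simp: d_def\<close>)
  then show ?thesis using le_addE[OF assms(1) ld] by simp
qed

definition lessE :: "(nat list \<times> nat list) set" where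
  "lessE = {(a, b). length a = n \<and> length b = n \<and> strict le a b}"

lemma wf_lessE: "wf lessE"
proof (rule ccontr)
  assume "\<not> wf lessE"
  then obtain f where f: "\<forall>i. (f (Suc i), f i) \<in> lessE" using wf_iff_no_infinite_down_chain by blast
  have len: "\<forall>k. length (f k) = n" using f unfolding lessE_def by (metis (mono_tags, lifting) case_prodD mem_Collect_eq)
  have chain: "k < l \<Longrightarrow> strict le (f l) (f k)" for k l
  proof (induction l)
    case 0 then show ?case by simp
  next
    case (Suc l)
    have s: "strict le (f (Suc l)) (f l)" using f unfolding lessE_def by auto
    show ?case
    proof (cases "k = l")
      case True then show ?thesis using s by simp
    next
      case False
      then have "strict le (f l) (f k)" using Suc by simp
      then show ?thesis using s strans len by blast
    qed
  qed
  obtain \<phi> where sm: "strict_mono \<phi>" and m: "\<forall>k l::nat. k \<le> l \<longrightarrow> (\<forall>i<n. f (\<phi> k) ! i \<le> f (\<phi> l) ! i)"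
    using dickson len by blast
  have "le (f (\<phi> 0)) (f (\<phi> 1))" using m len by (intro compw_le) auto
  moreover have "strict le (f (\<phi> 1)) (f (\<phi> 0))" using chain sm by (simp add: strict_mono_def)
  ultimately show False using strict_asym len le_iff_not_strict by blast
qed

end

lemma eps_length[simp]: "length (eps n i) = n"
  by (simp add: eps_def)

lemma eps_nth: "i < n \<Longrightarrow> k < n \<Longrightarrow> eps n i ! k = (if k = i then 1 else 0)"
  by (simp add: eps_def nth_list_update)

lemma addE_eps: "length \<delta> = n \<Longrightarrow> i < n \<Longrightarrow> addE \<delta> (eps n i) = \<delta>[i := Suc (\<delta> ! i)]"
  by (rule nth_equalityI) (auto simp: eps_nth nth_list_update)

lemma upt_split: "i < n \<Longrightarrow> [0..<n] = [0..<i] @ i # [Suc i..<n]"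
  using upt_add_eq_append[of 0 i "n - i"] upt_conv_Cons[of i n] by simp

lemma mon_Suc:
  assumes "i < n" "length \<delta> = n" "\<forall>k<i. \<delta> ! k = 0"
  shows "x i * mon x n \<delta> = mon x n (\<delta>[i := Suc (\<delta> ! i)])"
proof -
  define \<delta>' where "\<delta>' = \<delta>[i := Suc (\<delta> ! i)]"
  have pre: "map (\<lambda>k. x k ^ (d ! k)) [0..<i] = replicate i 1" if "\<forall>k<i. d ! k = 0" for d :: "nat list"
    using that by (intro nth_equalityI) auto
  have pre': "\<forall>k<i. \<delta>' ! k = 0" using assms by (simp add: \<delta>'_def nth_list_update)
  have post: "map (\<lambda>k. x k ^ (\<delta>' ! k)) [Suc i..<n] = map (\<lambda>k. x k ^ (\<delta> ! k)) [Suc i..<n]"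
    by (rule map_cong) (auto simp: \<delta>'_def nth_list_update)
  have post2: "prod_list (map (\<lambda>k. x k ^ (\<delta>' ! k)) [Suc i..<n]) = prod_list (map (\<lambda>k. x k ^ (\<delta> ! k)) [Suc i..<n])"
    by (simp only: post)
  have di: "\<delta>' ! i = Suc (\<delta> ! i)" using assms by (simp add: \<delta>'_def)
  have "mon x n \<delta> = x i ^ (\<delta> ! i) * prod_list (map (\<lambda>k. x k ^ (\<delta> ! k)) [Suc i..<n])"
    unfolding mon_def using upt_split[OF assms(1)] pre[OF assms(3)] by simp
  moreover have "mon x n \<delta>' = x i ^ Suc (\<delta> ! i) * prod_list (map (\<lambda>k. x k ^ (\<delta> ! k)) [Suc i..<n])"
    unfolding mon_def using upt_split[OF assms(1)] pre[OF pre'] post2 di by simp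
  ultimately show ?thesis by (simp add: \<delta>'_def mult.assoc)
qed

lemma mon_zero: "(\<forall>k<n. a ! k = 0) \<Longrightarrow> mon x n a = 1"
  unfolding mon_def by (induction n) auto

locale pbwl = adm n le for sc :: "'k::field \<Rightarrow> 'r::ring_1" and x :: "nat \<Rightarrow> 'r" and n le +
  assumes pbw: "pbw sc x n le"
begin

lemma kal: "k_algebra sc" using pbw unfolding pbw_def by (elim conjE)
lemma kal_all: "sc 1 = 1 \<and> (\<forall>a b. sc (a + b) = sc a + sc b) \<and>
     (\<forall>a b. sc (a * b) = sc a * sc b) \<and> (\<forall>a r. sc a * r = r * sc a)"
  using kal unfolding k_algebra_def .
lemma sc1[simp]: "sc 1 = 1" using kal_all by (elim conjE)
lemma sc_add: "sc (a + b) = sc a + sc b" using conjunct1[OF conjunct2[OF kal_all]] by (elim allE)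
lemma sc_mult: "sc (a * b) = sc a * sc b" using conjunct1[OF conjunct2[OF conjunct2[OF kal_all]]] by (elim allE)
lemma sc_central: "sc a * r = r * sc a" using conjunct2[OF conjunct2[OF conjunct2[OF kal_all]]] by (elim allE)
lemma sc0[simp]: "sc 0 = 0"
proof -
  have "sc 0 = sc 0 + sc 0" using sc_add[of 0 0] by simp
  then show ?thesis by simp
qed
lemma sc_sum: "sc (\<Sum>t\<in>T. f t) = (\<Sum>t\<in>T. sc (f t))"
  by (induction T rule: infinite_finite_induct) (auto simp: sc_add)

lemma rels: "\<forall>i j. i < j \<and> j < n \<longrightarrow>
        (\<exists>q p. q \<noteq> 0 \<and> fsupp n p \<and>
           (\<forall>\<alpha>. p \<alpha> \<noteq> 0 \<longrightarrow> strict le \<alpha> (addE (eps n i) (eps n j))) \<and>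
           x j * x i = sc q * x i * x j + lin sc x n p)"
  using pbw unfolding pbw_def by (elim conjE)

lemma rel: "i < j \<Longrightarrow> j < n \<Longrightarrow> \<exists>q p. q \<noteq> 0 \<and> fsupp n p \<and>
           (\<forall>\<alpha>. p \<alpha> \<noteq> 0 \<longrightarrow> strict le \<alpha> (addE (eps n i) (eps n j))) \<and>
           x j * x i = sc q * x i * x j + lin sc x n p"
  using rels by simp

lemma basis_all: "\<forall>r. \<exists>!c. fsupp n c \<and> r = lin sc x n c"
  using pbw unfolding pbw_def by (elim conjE)

lemma basis: "\<exists>!c. fsupp n c \<and> r = lin sc x n c"
  using basis_all by simp

lemma cf_prop: "fsupp n (cf sc x n r) \<and> r = lin sc x n (cf sc x n r)"
  unfolding cf_def using theI'[OF basis[of r]] .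

lemma cf_fsupp: "fsupp n (cf sc x n r)" using cf_prop by blast
lemma cf_lin: "lin sc x n (cf sc x n r) = r" using cf_prop by metis
lemma cf_finite: "finite {\<alpha>. cf sc x n r \<alpha> \<noteq> 0}" using cf_fsupp by (simp add: fsupp_def)
lemma cf_len: "cf sc x n r \<alpha> \<noteq> 0 \<Longrightarrow> length \<alpha> = n" using cf_fsupp by (simp add: fsupp_def)

lemma cf_unique: assumes "fsupp n c" "r = lin sc x n c" shows "cf sc x n r = c"
proof -
  obtain c0 where c0: "fsupp n c0 \<and> r = lin sc x n c0" "\<And>c'. fsupp n c' \<and> r = lin sc x n c' \<Longrightarrow> c' = c0"
    using basis[of r] unfolding Ex1_def by blast
  have "cf sc x n r = c0" using c0(2) cf_prop by blast
  moreover have "c = c0" using c0(2) assms by blast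
  ultimately show ?thesis by simp
qed

lemma lin_superset: "finite S \<Longrightarrow> {\<alpha>. c \<alpha> \<noteq> 0} \<subseteq> S \<Longrightarrow> lin sc x n c = (\<Sum>\<alpha>\<in>S. sc (c \<alpha>) * mon x n \<alpha>)"
  unfolding lin_def by (rule sum.mono_neutral_left) auto

lemma r_expand: "r = (\<Sum>\<alpha>\<in>{\<alpha>. cf sc x n r \<alpha> \<noteq> 0}. sc (cf sc x n r \<alpha>) * mon x n \<alpha>)"
  using cf_lin[of r] unfolding lin_def by simp

lemma cf_lincomb:
  assumes T: "finite T"
  shows "cf sc x n (\<Sum>t\<in>T. sc (a t) * r t) = (\<lambda>\<alpha>. \<Sum>t\<in>T. a t * cf sc x n (r t) \<alpha>)"
proof (rule cf_unique)
  define C where "C = (\<lambda>\<alpha>. \<Sum>t\<in>T. a t * cf sc x n (r t) \<alpha>)"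
  define S where "S = (\<Union>t\<in>T. {\<alpha>. cf sc x n (r t) \<alpha> \<noteq> 0})"
  have fS: "finite S" unfolding S_def using T cf_finite by blast
  have sub: "{\<alpha>. C \<alpha> \<noteq> 0} \<subseteq> S"
  proof
    fix \<alpha> assume "\<alpha> \<in> {\<alpha>. C \<alpha> \<noteq> 0}"
    then have "C \<alpha> \<noteq> 0" by simp
    then obtain t where "t \<in> T" "a t * cf sc x n (r t) \<alpha> \<noteq> 0" unfolding C_def
      by (meson sum.neutral)
    then show "\<alpha> \<in> S" unfolding S_def by auto
  qed
  have lS: "\<alpha> \<in> S \<Longrightarrow> length \<alpha> = n" for \<alpha> unfolding S_def using cf_len by blast
  show "fsupp n C" unfolding fsupp_def using sub fS lS by (meson finite_subset mem_Collect_eq subsetD)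
  have "lin sc x n C = (\<Sum>\<alpha>\<in>S. sc (C \<alpha>) * mon x n \<alpha>)" by (rule lin_superset[OF fS sub])
  also have "\<dots> = (\<Sum>\<alpha>\<in>S. \<Sum>t\<in>T. sc (a t) * (sc (cf sc x n (r t) \<alpha>) * mon x n \<alpha>))"
    unfolding C_def sc_sum sum_distrib_right by (simp add: sc_mult mult.assoc)
  also have "\<dots> = (\<Sum>t\<in>T. sc (a t) * (\<Sum>\<alpha>\<in>S. sc (cf sc x n (r t) \<alpha>) * mon x n \<alpha>))"
    by (subst sum.swap) (simp add: sum_distrib_left)
  also have "\<dots> = (\<Sum>t\<in>T. sc (a t) * r t)"
  proof (rule sum.cong[OF HOL.refl])
    fix t assume "t \<in> T"
    then have "{\<alpha>. cf sc x n (r t) \<alpha> \<noteq> 0} \<subseteq> S" unfolding S_def by blast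
    then have "lin sc x n (cf sc x n (r t)) = (\<Sum>\<alpha>\<in>S. sc (cf sc x n (r t) \<alpha>) * mon x n \<alpha>)"
      by (rule lin_superset[OF fS])
    then show "sc (a t) * (\<Sum>\<alpha>\<in>S. sc (cf sc x n (r t) \<alpha>) * mon x n \<alpha>) = sc (a t) * r t"
      using cf_lin[of "r t"] by simp
  qed
  finally show "(\<Sum>t\<in>T. sc (a t) * r t) = lin sc x n C" by simp
qed

lemma cf_mon: "length e = n \<Longrightarrow> cf sc x n (mon x n e) = (\<lambda>\<alpha>. if \<alpha> = e then 1 else 0)"
proof (rule cf_unique)
  assume "length e = n"
  then show "fsupp n (\<lambda>\<alpha>. if \<alpha> = e then 1 else (0::'k))" unfolding fsupp_def by auto
  have "{\<alpha>. (if \<alpha> = e then 1 else (0::'k)) \<noteq> 0} = {e}" by auto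
  then show "mon x n e = lin sc x n (\<lambda>\<alpha>. if \<alpha> = e then 1 else 0)" unfolding lin_def by simp
qed

definition inF :: "nat list \<Rightarrow> 'r \<Rightarrow> bool" where
  "inF e r \<longleftrightarrow> (\<forall>\<gamma>. cf sc x n r \<gamma> \<noteq> 0 \<longrightarrow> le \<gamma> e)"

lemma inF_lincomb:
  assumes "finite T" "\<forall>t\<in>T. inF e (r t)"
  shows "inF e (\<Sum>t\<in>T. sc (a t) * r t)"
  unfolding inF_def cf_lincomb[OF assms(1)]
proof (intro allI impI)
  fix \<gamma> assume "(\<Sum>t\<in>T. a t * cf sc x n (r t) \<gamma>) \<noteq> 0"
  then obtain t where "t \<in> T" "a t * cf sc x n (r t) \<gamma> \<noteq> 0" by (meson sum.neutral)
  then show "le \<gamma> e" using assms(2) unfolding inF_def by auto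
qed

lemma inF_sum:
  assumes "finite T" "\<forall>t\<in>T. inF e (r t)"
  shows "inF e (\<Sum>t\<in>T. r t)"
  using inF_lincomb[OF assms, of "\<lambda>_. 1"] by simp

lemma inF_add: "inF e r1 \<Longrightarrow> inF e r2 \<Longrightarrow> inF e (r1 + r2)"
  using inF_sum[of "{True, False}" e "\<lambda>b. if b then r1 else r2"] by simp

lemma inF_scale: "inF e r \<Longrightarrow> inF e (sc c * r)"
  using inF_lincomb[of "{()}" e "\<lambda>_. r" "\<lambda>_. c"] by simp

lemma inF_mono: "length e = n \<Longrightarrow> length e' = n \<Longrightarrow> le e e' \<Longrightarrow> inF e r \<Longrightarrow> inF e' r"
  unfolding inF_def
proof (intro allI impI)
  fix \<gamma> assume a: "length e = n" "length e' = n" "le e e'" "\<forall>\<gamma>. cf sc x n r \<gamma> \<noteq> 0 \<longrightarrow> le \<gamma> e"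
    and g: "cf sc x n r \<gamma> \<noteq> 0"
  have "le \<gamma> e" using a(4) g by simp
  moreover have "length \<gamma> = n" using cf_len g by simp
  ultimately show "le \<gamma> e'" using ltrans[of \<gamma> e e'] a by simp
qed

lemma inF_mon: "length e = n \<Longrightarrow> inF e (mon x n e)"
  unfolding inF_def cf_mon by (auto intro: lrefl)

lemma inF_expand:
  assumes "length e = n" "\<And>\<delta>. length \<delta> = n \<Longrightarrow> le \<delta> e \<Longrightarrow> inF e (f (mon x n \<delta>))"
    and lin: "\<And>c r. f (sc c * r) = sc c * f r" "\<And>(A::nat list set) g. finite A \<Longrightarrow> f (\<Sum>a\<in>A. g a) = (\<Sum>a\<in>A. f (g a))"
    and r: "inF e r"
  shows "inF e (f r)"
proof -
  have "f r = (\<Sum>\<alpha>\<in>{\<alpha>. cf sc x n r \<alpha> \<noteq> 0}. sc (cf sc x n r \<alpha>) * f (mon x n \<alpha>))"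
    by (subst r_expand[of r]) (simp add: lin(2)[OF cf_finite] lin(1))
  also have "inF e \<dots>"
    by (rule inF_lincomb[OF cf_finite]) (use assms(2) r cf_len in \<open>auto simp: inF_def\<close>)
  finally show ?thesis .
qed

end

lemma first_nonzero:
  assumes "\<exists>k<m. (a::nat list) ! k \<noteq> 0"
  shows "\<exists>i<m. a ! i \<noteq> 0 \<and> (\<forall>k<i. a ! k = 0)"
proof -
  obtain k where k: "k < m" "a ! k \<noteq> 0" using assms by blast
  define i where "i = (LEAST k. a ! k \<noteq> 0)"
  have ai: "a ! i \<noteq> 0" unfolding i_def by (rule LeastI[of _ k]) (rule k(2))
  have ik: "i \<le> k" unfolding i_def by (rule Least_le) (rule k(2))
  have "\<forall>k'<i. a ! k' = 0" unfolding i_def using not_less_Least by blast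
  then show ?thesis using ai ik k(1) by (intro exI[where x=i]) auto
qed

lemma dec_facts:
  assumes "length a = n" "i < n" "a ! i \<noteq> 0" "\<forall>k<i. a ! k = 0"
  shows "length (a[i := a ! i - 1]) = n"
    and "\<forall>k<i. a[i := a ! i - 1] ! k = 0"
    and "(a[i := a ! i - 1])[i := Suc (a[i := a ! i - 1] ! i)] = a"
    and "addE (a[i := a ! i - 1]) (eps n i) = a"
proof -
  show "length (a[i := a ! i - 1]) = n" using assms by simp
  show "\<forall>k<i. a[i := a ! i - 1] ! k = 0" using assms by (simp add: nth_list_update)
  show "(a[i := a ! i - 1])[i := Suc (a[i := a ! i - 1] ! i)] = a" using assms by simp
  then show "addE (a[i := a ! i - 1]) (eps n i) = a" using assms by (simp add: addE_eps)
qed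

context pbwl
begin

lemma eps_pos: "i < n \<Longrightarrow> strict le (replicate n 0) (eps n i)"
  unfolding strict_def
proof
  assume i: "i < n"
  show "le (replicate n 0) (eps n i)" by (rule zero_min) simp
  have "eps n i ! i = 1" using i by (simp add: eps_nth)
  then show "replicate n 0 \<noteq> eps n i" using i by (metis nth_replicate zero_neq_one)
qed

lemma lt_add_eps: "length e = n \<Longrightarrow> i < n \<Longrightarrow> strict le e (addE e (eps n i))"
  using smono_left[of "replicate n 0" "eps n i" e] eps_pos by simp

lemma sc_comm_mid: "y * (sc c * m) = sc c * (y * m)"
  by (metis mult.assoc sc_central)

lemma inF_expand2:
  assumes r: "inF e r" and "length e = n"
    and m: "\<And>\<delta>. length \<delta> = n \<Longrightarrow> le \<delta> e \<Longrightarrow> inF e2 (y * mon x n \<delta>)"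
  shows "inF e2 (y * r)"
proof -
  have "y * r = y * (\<Sum>\<alpha>\<in>{\<alpha>. cf sc x n r \<alpha> \<noteq> 0}. sc (cf sc x n r \<alpha>) * mon x n \<alpha>)"
    by (subst r_expand[of r]) (rule HOL.refl)
  also have "\<dots> = (\<Sum>\<alpha>\<in>{\<alpha>. cf sc x n r \<alpha> \<noteq> 0}. sc (cf sc x n r \<alpha>) * (y * mon x n \<alpha>))"
    by (simp add: sum_distrib_left sc_comm_mid)
  finally have eq: "y * r = (\<Sum>\<alpha>\<in>{\<alpha>. cf sc x n r \<alpha> \<noteq> 0}. sc (cf sc x n r \<alpha>) * (y * mon x n \<alpha>))" .
  have "inF e2 (\<Sum>\<alpha>\<in>{\<alpha>. cf sc x n r \<alpha> \<noteq> 0}. sc (cf sc x n r \<alpha>) * (y * mon x n \<alpha>))"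
  proof (rule inF_lincomb[OF cf_finite], rule ballI)
    fix \<alpha> assume "\<alpha> \<in> {\<alpha>. cf sc x n r \<alpha> \<noteq> 0}"
    then have "cf sc x n r \<alpha> \<noteq> 0" by simp
    then have "length \<alpha> = n" "le \<alpha> e" using cf_len r unfolding inF_def by auto
    then show "inF e2 (y * mon x n \<alpha>)" by (rule m)
  qed
  then show ?thesis using eq by simp
qed

lemma pbw_main:
  "length e = n \<Longrightarrow>
    (\<forall>j a. j < n \<longrightarrow> length a = n \<longrightarrow> addE a (eps n j) = e \<longrightarrow> inF e (x j * mon x n a)) \<and>
    (\<forall>a b. length a = n \<longrightarrow> length b = n \<longrightarrow> addE a b = e \<longrightarrow> inF e (mon x n a * mon x n b))"
proof (induction e rule: wf_induct[OF wf_lessE])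
  case (1 e)
  have le_e: "length e = n" by fact
  have IH2: "inF e' (x j * mon x n a)"
    if "length e' = n" "strict le e' e" "j < n" "length a = n" "addE a (eps n j) = e'" for e' j a
  proof -
    have "(e', e) \<in> lessE" unfolding lessE_def using that le_e by simp
    then show ?thesis using 1 that by blast
  qed
  have IH1: "inF e' (mon x n a * mon x n b)"
    if "length e' = n" "strict le e' e" "length a = n" "length b = n" "addE a b = e'" for e' a b
  proof -
    have "(e', e) \<in> lessE" unfolding lessE_def using that le_e by simp
    then show ?thesis using 1 that by blast
  qed
  have part2: "inF e (x j * mon x n a)" if j: "j < n" and la: "length a = n" and ae: "addE a (eps n j) = e" for j a
  proof (cases "\<exists>k<j. a ! k \<noteq> 0")
    case False
    then have "x j * mon x n a = mon x n (a[j := Suc (a ! j)])" using j la by (intro mon_Suc) auto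
    also have "\<dots> = mon x n e" using ae addE_eps[OF la j] by simp
    finally show ?thesis using inF_mon[OF le_e] by simp
  next
    case True
    then obtain i where i: "i < j" "a ! i \<noteq> 0" "\<forall>k<i. a ! k = 0" using first_nonzero by blast
    have iN: "i < n" using i j by simp
    define a' where "a' = a[i := a ! i - 1]"
    have la': "length a' = n" and z': "\<forall>k<i. a' ! k = 0" and up: "a'[i := Suc (a' ! i)] = a"
        and ad: "addE a' (eps n i) = a"
      using dec_facts[OF la iN i(2) i(3)] unfolding a'_def by blast+
    have mona: "mon x n a = x i * mon x n a'" using mon_Suc[where x=x, OF iN la' z'] up by simp
    obtain q p where qp: "q \<noteq> 0" "fsupp n p" "\<forall>\<alpha>. p \<alpha> \<noteq> 0 \<longrightarrow> strict le \<alpha> (addE (eps n i) (eps n j))"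
        "x j * x i = sc q * x i * x j + lin sc x n p"
      using rel[OF i(1) j] by blast
    define e' where "e' = addE a' (eps n j)"
    have le': "length e' = n" using la' by (simp add: e'_def)
    have ee: "e = addE e' (eps n i)"
    proof -
      have "e = addE (addE a' (eps n i)) (eps n j)" using ae ad by simp
      also have "\<dots> = addE (addE a' (eps n j)) (eps n i)" by (simp add: addE_assoc addE_comm[of "eps n i" "eps n j"])
      finally show ?thesis unfolding e'_def .
    qed
    have lt': "strict le e' e" using lt_add_eps[OF le' iN] ee by simp
    have X: "inF e' (x j * mon x n a')" using IH2[OF le' lt' j la'] e'_def by simp
    have C1: "inF e (x i * (x j * mon x n a'))"
    proof (rule inF_expand2[OF X le'])
      fix \<delta> assume ld: "length \<delta> = n" and dle: "le \<delta> e'"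
      show "inF e (x i * mon x n \<delta>)"
      proof (cases "\<delta> = e'")
        case True
        have z: "\<forall>k<i. e' ! k = 0" using z' i(1) j la' unfolding e'_def by (simp add: eps_nth)
        have "x i * mon x n \<delta> = mon x n (e'[i := Suc (e' ! i)])" using mon_Suc[where x=x, OF iN le' z] True by simp
        also have "\<dots> = mon x n e" using ee addE_eps[OF le' iN] by simp
        finally show ?thesis using inF_mon[OF le_e] by simp
      next
        case False
        then have sd: "strict le \<delta> e'" using dle unfolding strict_def by simp
        have l2: "length (addE \<delta> (eps n i)) = n" using ld by simp
        have s2: "strict le (addE \<delta> (eps n i)) e" using smono[OF ld le' _ sd, of "eps n i"] ee by simp
        have "inF (addE \<delta> (eps n i)) (x i * mon x n \<delta>)" using IH2[OF l2 s2 iN ld] by simp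
        then show ?thesis using inF_mono[OF l2 le_e] s2 unfolding strict_def by blast
      qed
    qed
    have C2: "inF e (lin sc x n p * mon x n a')"
    proof -
      have eq: "lin sc x n p * mon x n a' = (\<Sum>\<gamma>\<in>{\<gamma>. p \<gamma> \<noteq> 0}. sc (p \<gamma>) * (mon x n \<gamma> * mon x n a'))"
        unfolding lin_def by (simp add: sum_distrib_right mult.assoc)
      have "inF e (\<Sum>\<gamma>\<in>{\<gamma>. p \<gamma> \<noteq> 0}. sc (p \<gamma>) * (mon x n \<gamma> * mon x n a'))"
      proof (rule inF_lincomb, rule conjunct1[OF qp(2)[unfolded fsupp_def]], rule ballI)
        fix \<gamma> assume "\<gamma> \<in> {\<gamma>. p \<gamma> \<noteq> 0}"
        then have pg: "p \<gamma> \<noteq> 0" by simp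
        then have lg: "length \<gamma> = n" using qp(2) unfolding fsupp_def by blast
        have sg: "strict le \<gamma> (addE (eps n i) (eps n j))" using qp(3) pg by blast
        have eq2: "e = addE (addE (eps n i) (eps n j)) a'"
        proof -
          have "addE (addE a' (eps n j)) (eps n i) = addE (addE (eps n i) (eps n j)) a'"
            by (rule nth_equalityI) (use la' in auto)
          then show ?thesis using ee unfolding e'_def by simp
        qed
        have l3: "length (addE \<gamma> a') = n" using lg la' by simp
        have s3: "strict le (addE \<gamma> a') e" using smono[OF lg _ la' sg] eq2 by simp
        have "inF (addE \<gamma> a') (mon x n \<gamma> * mon x n a')" using IH1[OF l3 s3 lg la'] by simp
        then show "inF e (mon x n \<gamma> * mon x n a')" using inF_mono[OF l3 le_e] s3 unfolding strict_def by blast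
      qed
      then show ?thesis using eq by simp
    qed
    have "x j * mon x n a = (x j * x i) * mon x n a'" using mona by (simp add: mult.assoc)
    also have "\<dots> = sc q * (x i * (x j * mon x n a')) + lin sc x n p * mon x n a'"
      using qp(4) by (simp add: distrib_right mult.assoc)
    finally show ?thesis using C1 C2 inF_add inF_scale by simp
  qed
  have part1: "inF e (mon x n a * mon x n b)" if la: "length a = n" and lb: "length b = n" and ab: "addE a b = e" for a b
  proof (cases "\<exists>k<n. a ! k \<noteq> 0")
    case False
    then have a0: "a = replicate n 0" using la by (intro nth_equalityI) auto
    have "mon x n a = 1" using False by (intro mon_zero) auto
    moreover have "b = e" using ab a0 lb by simp
    ultimately show ?thesis using inF_mon[OF le_e] by simp
  next
    case True
    then obtain i where i: "i < n" "a ! i \<noteq> 0" "\<forall>k<i. a ! k = 0" using first_nonzero by blast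
    define a' where "a' = a[i := a ! i - 1]"
    have la': "length a' = n" and z': "\<forall>k<i. a' ! k = 0" and up: "a'[i := Suc (a' ! i)] = a"
        and ad: "addE a' (eps n i) = a"
      using dec_facts[OF la i(1) i(2) i(3)] unfolding a'_def by blast+
    have mona: "mon x n a = x i * mon x n a'" using mon_Suc[where x=x, OF i(1) la' z'] up by simp
    define e' where "e' = addE a' b"
    have le': "length e' = n" using la' lb by (simp add: e'_def)
    have ee: "e = addE e' (eps n i)"
    proof -
      have "addE (addE a' (eps n i)) b = addE (addE a' b) (eps n i)"
        by (rule nth_equalityI) (use la' lb in auto)
      then show ?thesis using ab ad unfolding e'_def by simp
    qed
    have lt': "strict le e' e" using lt_add_eps[OF le' i(1)] ee by simp
    have Y: "inF e' (mon x n a' * mon x n b)" using IH1[OF le' lt' la' lb] e'_def by simp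
    have "inF e (x i * (mon x n a' * mon x n b))"
    proof (rule inF_expand2[OF Y le'])
      fix \<delta> assume ld: "length \<delta> = n" and dle: "le \<delta> e'"
      show "inF e (x i * mon x n \<delta>)"
      proof (cases "\<delta> = e'")
        case True
        then show ?thesis using part2[OF i(1) ld] ee by simp
      next
        case False
        then have sd: "strict le \<delta> e'" using dle unfolding strict_def by simp
        have l2: "length (addE \<delta> (eps n i)) = n" using ld by simp
        have s2: "strict le (addE \<delta> (eps n i)) e" using smono[OF ld le' _ sd, of "eps n i"] ee by simp
        have "inF (addE \<delta> (eps n i)) (x i * mon x n \<delta>)" using IH2[OF l2 s2 i(1) ld] by simp
        then show ?thesis using inF_mono[OF l2 le_e] s2 unfolding strict_def by blast
      qed
    qed
    then show ?thesis using mona by (simp add: mult.assoc)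
  qed
  show ?case using part1 part2 by blast
qed

lemma pbw_prod: "length a = n \<Longrightarrow> length b = n \<Longrightarrow> inF (addE a b) (mon x n a * mon x n b)"
  using pbw_main[of "addE a b"] by simp

lemma pbw_prod_cf: "length a = n \<Longrightarrow> length b = n \<Longrightarrow> cf sc x n (mon x n a * mon x n b) \<gamma> \<noteq> 0 \<Longrightarrow> le \<gamma> (addE a b)"
  using pbw_prod unfolding inF_def by blast

end

definition sto :: "'a set \<Rightarrow> ('a \<Rightarrow> 'a \<Rightarrow> bool) \<Rightarrow> bool" where
  "sto D lt \<longleftrightarrow> (\<forall>a\<in>D. \<not> lt a a) \<and> (\<forall>a\<in>D. \<forall>b\<in>D. \<forall>c\<in>D. lt a b \<longrightarrow> lt b c \<longrightarrow> lt a c) \<and>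
     (\<forall>a\<in>D. \<forall>b\<in>D. a \<noteq> b \<longrightarrow> lt a b \<or> lt b a)"

lemma stoI:
  assumes "\<And>a. a \<in> D \<Longrightarrow> \<not> lt a a"
    and "\<And>a b c. a \<in> D \<Longrightarrow> b \<in> D \<Longrightarrow> c \<in> D \<Longrightarrow> lt a b \<Longrightarrow> lt b c \<Longrightarrow> lt a c"
    and "\<And>a b. a \<in> D \<Longrightarrow> b \<in> D \<Longrightarrow> a \<noteq> b \<Longrightarrow> lt a b \<or> lt b a"
  shows "sto D lt"
  unfolding sto_def using assms by blast

lemma sto_irrefl: "sto D lt \<Longrightarrow> a \<in> D \<Longrightarrow> \<not> lt a a"
  unfolding sto_def by blast
lemma sto_trans: "sto D lt \<Longrightarrow> a \<in> D \<Longrightarrow> b \<in> D \<Longrightarrow> c \<in> D \<Longrightarrow> lt a b \<Longrightarrow> lt b c \<Longrightarrow> lt a c"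
  unfolding sto_def by blast
lemma sto_total: "sto D lt \<Longrightarrow> a \<in> D \<Longrightarrow> b \<in> D \<Longrightarrow> a \<noteq> b \<Longrightarrow> lt a b \<or> lt b a"
  unfolding sto_def by blast
lemma sto_asym: "sto D lt \<Longrightarrow> a \<in> D \<Longrightarrow> b \<in> D \<Longrightarrow> lt a b \<Longrightarrow> \<not> lt b a"
  using sto_irrefl sto_trans by metis

lemma sto_mono: "sto D lt \<Longrightarrow> D' \<subseteq> D \<Longrightarrow> sto D' lt"
  unfolding sto_def by blast

definition lexo :: "(nat list \<Rightarrow> nat list \<Rightarrow> bool) \<Rightarrow> ('a \<Rightarrow> nat list) \<Rightarrow> ('a \<Rightarrow> nat list) \<Rightarrow> 'a \<Rightarrow> 'a \<Rightarrow> bool" where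
  "lexo sl k1 k2 a b \<longleftrightarrow> sl (k1 a) (k1 b) \<or> (k1 a = k1 b \<and> sl (k2 a) (k2 b))"

lemma sto_lexo:
  assumes s: "sto E sl" and k1: "\<And>a. a \<in> D \<Longrightarrow> k1 a \<in> E" and k2: "\<And>a. a \<in> D \<Longrightarrow> k2 a \<in> E"
    and inj: "\<And>a b. a \<in> D \<Longrightarrow> b \<in> D \<Longrightarrow> k1 a = k1 b \<Longrightarrow> k2 a = k2 b \<Longrightarrow> a = b"
  shows "sto D (lexo sl k1 k2)"
proof (rule stoI)
  fix a assume "a \<in> D"
  then show "\<not> lexo sl k1 k2 a a" unfolding lexo_def using sto_irrefl[OF s] k1 k2 by blast
next
  fix a b c assume abc: "a \<in> D" "b \<in> D" "c \<in> D" and ab: "lexo sl k1 k2 a b" and bc: "lexo sl k1 k2 b c"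
  have E: "k1 a \<in> E" "k1 b \<in> E" "k1 c \<in> E" "k2 a \<in> E" "k2 b \<in> E" "k2 c \<in> E" using abc k1 k2 by auto
  show "lexo sl k1 k2 a c"
    using ab bc sto_trans[OF s] E unfolding lexo_def by metis
next
  fix a b assume ab: "a \<in> D" "b \<in> D" "a \<noteq> b"
  have E: "k1 a \<in> E" "k1 b \<in> E" "k2 a \<in> E" "k2 b \<in> E" using ab k1 k2 by auto
  show "lexo sl k1 k2 a b \<or> lexo sl k1 k2 b a"
  proof (cases "k1 a = k1 b")
    case True
    then have "k2 a \<noteq> k2 b" using inj ab by blast
    then show ?thesis using True sto_total[OF s E(3) E(4)] unfolding lexo_def by auto
  next
    case False
    then show ?thesis using sto_total[OF s E(1) E(2)] unfolding lexo_def by auto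
  qed
qed

lemma sto_modord:
  assumes s: "sto D lt"
  shows "sto (D \<times> UNIV) (modord istop lt)"
proof (cases istop)
  case True
  show ?thesis unfolding modord_def TOP_def using True
  proof (intro stoI, simp_all)
    fix a :: "'a \<times> nat" assume "a \<in> D \<times> UNIV" then show "\<not> lt (fst a) (fst a)" using sto_irrefl[OF s] by auto
  next
    fix a b c :: "'a \<times> nat" assume abc: "a \<in> D \<times> UNIV" "b \<in> D \<times> UNIV" "c \<in> D \<times> UNIV"
      and ab: "lt (fst a) (fst b) \<or> fst a = fst b \<and> snd b < snd a"
      and bc: "lt (fst b) (fst c) \<or> fst b = fst c \<and> snd c < snd b"
    have D: "fst a \<in> D" "fst b \<in> D" "fst c \<in> D" using abc by auto
    show "lt (fst a) (fst c) \<or> fst a = fst c \<and> snd c < snd a"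
      using ab bc sto_trans[OF s D] by auto
  next
    fix a b :: "'a \<times> nat" assume ab: "a \<in> D \<times> UNIV" "b \<in> D \<times> UNIV" "a \<noteq> b"
    have D: "fst a \<in> D" "fst b \<in> D" using ab by auto
    show "lt (fst a) (fst b) \<or> fst a = fst b \<and> snd b < snd a \<or> lt (fst b) (fst a) \<or> fst b = fst a \<and> snd a < snd b"
      using sto_total[OF s D] ab(3) by (cases a, cases b) auto
  qed
next
  case False
  show ?thesis unfolding modord_def POT_def using False
  proof (intro stoI, simp_all)
    fix a :: "'a \<times> nat" assume "a \<in> D \<times> UNIV" then show "\<not> lt (fst a) (fst a)" using sto_irrefl[OF s] by auto
  next
    fix a b c :: "'a \<times> nat" assume abc: "a \<in> D \<times> UNIV" "b \<in> D \<times> UNIV" "c \<in> D \<times> UNIV"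
      and ab: "snd b < snd a \<or> snd a = snd b \<and> lt (fst a) (fst b)"
      and bc: "snd c < snd b \<or> snd b = snd c \<and> lt (fst b) (fst c)"
    have D: "fst a \<in> D" "fst b \<in> D" "fst c \<in> D" using abc by auto
    show "snd c < snd a \<or> snd a = snd c \<and> lt (fst a) (fst c)"
      using ab bc sto_trans[OF s D] by auto
  next
    fix a b :: "'a \<times> nat" assume ab: "a \<in> D \<times> UNIV" "b \<in> D \<times> UNIV" "a \<noteq> b"
    have D: "fst a \<in> D" "fst b \<in> D" using ab by auto
    show "snd b < snd a \<or> snd a = snd b \<and> lt (fst a) (fst b) \<or> snd a < snd b \<or> snd b = snd a \<and> lt (fst b) (fst a)"
      using sto_total[OF s D] ab(3) by (cases a, cases b) auto
  qed
qed

lemma lead_unique: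
  assumes s: "sto D lt" and S: "S \<subseteq> D" and e: "e \<in> S" and m: "\<forall>e'\<in>S. e' \<noteq> e \<longrightarrow> lt e' e"
  shows "lead lt S = e"
  unfolding lead_def
proof (rule the_equality)
  show "e \<in> S \<and> (\<forall>e'\<in>S. e' \<noteq> e \<longrightarrow> lt e' e)" using e m by blast
next
  fix e2 assume h: "e2 \<in> S \<and> (\<forall>e'\<in>S. e' \<noteq> e2 \<longrightarrow> lt e' e2)"
  show "e2 = e"
  proof (rule ccontr)
    assume ne: "e2 \<noteq> e"
    then have "lt e2 e" using m h by blast
    moreover have "lt e e2"
    proof -
      have "\<forall>e'\<in>S. e' \<noteq> e2 \<longrightarrow> lt e' e2" using h by (elim conjE)
      then show ?thesis using e ne[symmetric] by blast
    qed
    ultimately show False using sto_asym[OF s] S e h by blast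
  qed
qed

lemma lead_exists:
  assumes s: "sto D lt" and fin: "finite S" and ne: "S \<noteq> {}" and S: "S \<subseteq> D"
  shows "\<exists>e\<in>S. \<forall>e'\<in>S. e' \<noteq> e \<longrightarrow> lt e' e"
  using fin ne S
proof (induction S rule: finite_ne_induct)
  case (singleton x) then show ?case by simp
next
  case (insert x F)
  then obtain e where e: "e \<in> F" "\<forall>e'\<in>F. e' \<noteq> e \<longrightarrow> lt e' e" by blast
  have xD: "x \<in> D" and eD: "e \<in> D" and FD: "F \<subseteq> D" using insert e by auto
  have xe: "x \<noteq> e" using insert e by blast
  show ?case
  proof (cases "lt e x")
    case True
    have "\<forall>e'\<in>insert x F. e' \<noteq> x \<longrightarrow> lt e' x"
    proof (intro ballI impI)
      fix e' assume "e' \<in> insert x F" "e' \<noteq> x"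
      then have e'F: "e' \<in> F" by simp
      show "lt e' x"
      proof (cases "e' = e")
        case True then show ?thesis using \<open>lt e x\<close> by simp
      next
        case False
        then have "lt e' e" using e e'F by blast
        then show ?thesis using sto_trans[OF s _ eD xD] \<open>lt e x\<close> e'F FD by blast
      qed
    qed
    then show ?thesis by blast
  next
    case False
    then have "lt x e" using sto_total[OF s xD eD xe] by blast
    then have "\<forall>e'\<in>insert x F. e' \<noteq> e \<longrightarrow> lt e' e" using e by blast
    then show ?thesis using e by blast
  qed
qed

lemma lead_prop:
  assumes s: "sto D lt" and fin: "finite S" and ne: "S \<noteq> {}" and S: "S \<subseteq> D"
  shows "lead lt S \<in> S \<and> (\<forall>e'\<in>S. e' \<noteq> lead lt S \<longrightarrow> lt e' (lead lt S))"
proof -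
  obtain e where "e \<in> S" "\<forall>e'\<in>S. e' \<noteq> e \<longrightarrow> lt e' e" using lead_exists[OF assms] by blast
  moreover have "lead lt S = e" using lead_unique[OF s S] calculation by blast
  ultimately show ?thesis by simp
qed

context adm
begin

lemma sto_sl: "sto {a. length a = n} (strict le)"
proof (rule stoI)
  fix a :: "nat list" show "\<not> strict le a a" unfolding strict_def by simp
next
  fix a b c :: "nat list" assume "a \<in> {a. length a = n}" "b \<in> {a. length a = n}" "c \<in> {a. length a = n}"
    "strict le a b" "strict le b c"
  then show "strict le a c" using strans[of a b c] by simp
next
  fix a b :: "nat list" assume "a \<in> {a. length a = n}" "b \<in> {a. length a = n}" "a \<noteq> b"
  then show "strict le a b \<or> strict le b a" using strict_total by auto
qed

end

definition D2 :: "nat \<Rightarrow> (nat list \<times> nat list) set" where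
  "D2 n = {p. length (fst p) = n \<and> length (snd p) = n}"

definition proj :: "nat list \<times> nat list \<Rightarrow> nat list" where
  "proj p = addE (fst p) (rev (snd p))"

definition emb_up :: "nat \<Rightarrow> nat list \<Rightarrow> nat list \<times> nat list" where
  "emb_up n e = (e, replicate n 0)"

definition emb_low :: "nat \<Rightarrow> nat list \<Rightarrow> nat list \<times> nat list" where
  "emb_low n e = (replicate n 0, rev e)"

lemma D2_iff[simp]: "p \<in> D2 n \<longleftrightarrow> length (fst p) = n \<and> length (snd p) = n"
  by (simp add: D2_def)

lemma addE_zero_iff:
  assumes "length a = n" "length b = n" "addE a b = replicate n 0"
  shows "a = replicate n 0" "b = replicate n 0"
proof -
  have h: "\<forall>i<n. a ! i + b ! i = 0"
  proof (intro allI impI)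
    fix i assume i: "i < n"
    have "addE a b ! i = replicate n 0 ! i" using assms(3) by simp
    then show "a ! i + b ! i = 0" using i assms(1,2) by simp
  qed
  show "a = replicate n 0" using h assms(1) by (intro nth_equalityI) auto
  show "b = replicate n 0" using h assms(2) by (intro nth_equalityI) auto
qed

lemma addE2_simp[simp]: "addE2 (a, b) (c, d) = (addE a c, addE b d)"
  by (simp add: addE2_def)

lemma mon_rep0: "mon x n (replicate n 0) = 1"
  by (rule mon_zero) simp

lemma up_E3:
  assumes "length e = n" "p \<in> D2 n" "d \<in> D2 n" "emb_up n e = addE2 p d"
  shows "\<exists>e0 \<gamma>. length e0 = n \<and> length \<gamma> = n \<and> p = emb_up n e0 \<and> e = addE e0 \<gamma>"
proof -
  obtain p1 p2 d1 d2 where pd: "p = (p1, p2)" "d = (d1, d2)" by (cases p, cases d)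
  have l: "length p1 = n" "length p2 = n" "length d1 = n" "length d2 = n" using assms(2,3) pd by auto
  have e1: "e = addE p1 d1" and e2: "replicate n 0 = addE p2 d2" using assms(4) pd by (simp_all add: emb_up_def)
  have "p2 = replicate n 0" using addE_zero_iff(1)[OF l(2) l(4) e2[symmetric]] .
  then show ?thesis using e1 l pd by (intro exI[where x=p1] exI[where x=d1]) (simp add: emb_up_def)
qed

lemma low_E3:
  assumes "length e = n" "p \<in> D2 n" "d \<in> D2 n" "emb_low n e = addE2 p d"
  shows "\<exists>e0 \<gamma>. length e0 = n \<and> length \<gamma> = n \<and> p = emb_low n e0 \<and> e = addE e0 \<gamma>"
proof -
  obtain p1 p2 d1 d2 where pd: "p = (p1, p2)" "d = (d1, d2)" by (cases p, cases d)
  have l: "length p1 = n" "length p2 = n" "length d1 = n" "length d2 = n" using assms(2,3) pd by auto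
  have e1: "replicate n 0 = addE p1 d1" and e2: "rev e = addE p2 d2" using assms(4) pd by (simp_all add: emb_low_def)
  have p1: "p1 = replicate n 0" using addE_zero_iff(1)[OF l(1) l(3) e1[symmetric]] .
  have "e = rev (addE p2 d2)" using e2 by (metis rev_rev_ident)
  also have "\<dots> = addE (rev p2) (rev d2)" using l by (simp add: rev_addE)
  finally have "e = addE (rev p2) (rev d2)" .
  then show ?thesis using p1 l pd by (intro exI[where x="rev p2"] exI[where x="rev d2"]) (simp add: emb_low_def)
qed

lemma up_E4: "length a = n \<Longrightarrow> length \<gamma> = n \<Longrightarrow> addE2 (emb_up n a) (emb_up n \<gamma>) = emb_up n (addE a \<gamma>)"
  by (simp add: emb_up_def)

lemma low_E4: "length a = n \<Longrightarrow> length \<gamma> = n \<Longrightarrow> addE2 (emb_low n a) (emb_low n \<gamma>) = emb_low n (addE a \<gamma>)"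
  by (simp add: emb_low_def rev_addE)

lemma up_E5: "length e = n \<Longrightarrow> emb_up n e \<in> D2 n \<and> proj (emb_up n e) = e"
  by (simp add: emb_up_def proj_def)

lemma low_E5: "length e = n \<Longrightarrow> emb_low n e \<in> D2 n \<and> proj (emb_low n e) = e"
  by (simp add: emb_low_def proj_def)

lemma up_E6: "length e = n \<Longrightarrow> mon x n (fst (emb_up n e)) * mon x n (rev (snd (emb_up n e))) = mon x n e"
  by (simp add: emb_up_def mon_rep0)

lemma low_E6: "length e = n \<Longrightarrow> mon x n (fst (emb_low n e)) * mon x n (rev (snd (emb_low n e))) = mon x n e"
  by (simp add: emb_low_def mon_rep0)

context adm
begin

lemma nsz: "length a = n \<Longrightarrow> \<not> strict le a (replicate n 0)"
  by (rule not_strict_zero)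

lemma sz0: "\<not> strict le (replicate n 0) (replicate n 0)"
  by (simp add: strict_def)

lemma su_E0: "sto (D2 n) (ord_star_up (strict le))"
proof -
  have eq: "ord_star_up (strict le) = lexo (strict le) (\<lambda>p. rev (snd p)) fst"
    by (intro ext) (simp add: ord_star_up_def lexo_def)
  show ?thesis unfolding eq
    by (rule sto_lexo[OF sto_sl]) (auto intro: prod_eqI)
qed

lemma su_E1: "length a = n \<Longrightarrow> length b = n \<Longrightarrow> ord_star_up (strict le) (emb_up n a) (emb_up n b) \<longleftrightarrow> strict le a b"
  by (simp add: ord_star_up_def emb_up_def sz0)

lemma su_E2:
  assumes p: "p \<in> D2 n" and e: "length e = n" and o: "ord_star_up (strict le) p (emb_up n e) \<or> p = emb_up n e"
  shows "le (proj p) e \<and> (proj p = e \<longrightarrow> p = emb_up n e)"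
proof -
  obtain p1 p2 where pp: "p = (p1, p2)" by (cases p)
  have l: "length p1 = n" "length p2 = n" using p pp by auto
  have "\<not> strict le (rev p2) (replicate n 0)" using nsz l by simp
  then have "(p2 = replicate n 0 \<and> strict le p1 e) \<or> (p1 = e \<and> p2 = replicate n 0)"
    using o pp by (auto simp: ord_star_up_def emb_up_def)
  then show ?thesis using pp l e lrefl by (auto simp: proj_def emb_up_def strict_def)
qed

lemma sl_E0: "sto (D2 n) (ord_star_low (strict le))"
proof -
  have eq: "ord_star_low (strict le) = lexo (strict le) fst (\<lambda>p. rev (snd p))"
    by (intro ext) (simp add: ord_star_low_def lexo_def)
  show ?thesis unfolding eq
    by (rule sto_lexo[OF sto_sl]) (auto intro: prod_eqI)
qed

lemma sl_E1: "length a = n \<Longrightarrow> length b = n \<Longrightarrow> ord_star_low (strict le) (emb_low n a) (emb_low n b) \<longleftrightarrow> strict le a b"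
  by (simp add: ord_star_low_def emb_low_def sz0)

lemma sl_E2:
  assumes p: "p \<in> D2 n" and e: "length e = n" and o: "ord_star_low (strict le) p (emb_low n e) \<or> p = emb_low n e"
  shows "le (proj p) e \<and> (proj p = e \<longrightarrow> p = emb_low n e)"
proof -
  obtain p1 p2 where pp: "p = (p1, p2)" by (cases p)
  have l: "length p1 = n" "length p2 = n" using p pp by auto
  have "\<not> strict le p1 (replicate n 0)" using nsz l by simp
  then have D: "p1 = replicate n 0 \<and> (strict le (rev p2) e \<or> rev p2 = e)"
    using o pp by (auto simp: ord_star_low_def emb_low_def)
  have pj: "proj p = rev p2" using D pp addE_zero_left[of "rev p2" n] l by (simp add: proj_def)
  have "le (rev p2) e" using D lrefl[OF e] unfolding strict_def by auto
  moreover have "rev p2 = e \<longrightarrow> p = emb_low n e" using D pp by (auto simp: emb_low_def)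
  ultimately show ?thesis using pj by simp
qed

lemma cu_E0: "sto (D2 n) (ord_c_up (strict le))"
proof -
  have eq: "ord_c_up (strict le) = lexo (strict le) proj (\<lambda>p. rev (snd p))"
    by (intro ext) (simp add: ord_c_up_def lexo_def proj_def)
  show ?thesis unfolding eq
  proof (rule sto_lexo[OF sto_sl])
    fix a b :: "nat list \<times> nat list" assume ab: "a \<in> D2 n" "b \<in> D2 n" "proj a = proj b" "rev (snd a) = rev (snd b)"
    then have s: "snd a = snd b" by simp
    have "fst a = fst b" using ab s addE_cancel[of "fst a" "rev (snd a)" "fst b"] by (simp add: proj_def)
    then show "a = b" using s by (simp add: prod_eq_iff)
  qed (auto simp: proj_def)
qed

lemma cu_E1: "length a = n \<Longrightarrow> length b = n \<Longrightarrow> ord_c_up (strict le) (emb_up n a) (emb_up n b) \<longleftrightarrow> strict le a b"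
  by (simp add: ord_c_up_def emb_up_def sz0)

lemma cu_E2:
  assumes p: "p \<in> D2 n" and e: "length e = n" and o: "ord_c_up (strict le) p (emb_up n e) \<or> p = emb_up n e"
  shows "le (proj p) e \<and> (proj p = e \<longrightarrow> p = emb_up n e)"
proof -
  obtain p1 p2 where pp: "p = (p1, p2)" by (cases p)
  have l: "length p1 = n" "length p2 = n" using p pp by auto
  have "\<not> strict le (rev p2) (replicate n 0)" using nsz l by simp
  then have "strict le (proj p) e \<or> p = emb_up n e"
    using o pp e by (auto simp: ord_c_up_def emb_up_def proj_def)
  then show ?thesis using pp l e lrefl by (auto simp: proj_def emb_up_def strict_def)
qed

lemma cl_E0: "sto (D2 n) (ord_c_low (strict le))"
proof -
  have eq: "ord_c_low (strict le) = lexo (strict le) proj fst"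
    by (intro ext) (simp add: ord_c_low_def lexo_def proj_def)
  show ?thesis unfolding eq
  proof (rule sto_lexo[OF sto_sl])
    fix a b :: "nat list \<times> nat list" assume ab: "a \<in> D2 n" "b \<in> D2 n" "proj a = proj b" "fst a = fst b"
    have "rev (snd a) = rev (snd b)" using ab addE_cancel_left[of "rev (snd a)" "fst a" "rev (snd b)"] by (simp add: proj_def)
    then show "a = b" using ab by (simp add: prod_eq_iff)
  qed (auto simp: proj_def)
qed

lemma cl_E1: "length a = n \<Longrightarrow> length b = n \<Longrightarrow> ord_c_low (strict le) (emb_low n a) (emb_low n b) \<longleftrightarrow> strict le a b"
  by (simp add: ord_c_low_def emb_low_def proj_def sz0)

lemma cl_E2:
  assumes p: "p \<in> D2 n" and e: "length e = n" and o: "ord_c_low (strict le) p (emb_low n e) \<or> p = emb_low n e"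
  shows "le (proj p) e \<and> (proj p = e \<longrightarrow> p = emb_low n e)"
proof -
  obtain p1 p2 where pp: "p = (p1, p2)" by (cases p)
  have l: "length p1 = n" "length p2 = n" using p pp by auto
  have "\<not> strict le p1 (replicate n 0)" using nsz l by simp
  then have D: "strict le (proj p) e \<or> p = emb_low n e"
    using o pp e by (auto simp: ord_c_low_def emb_low_def proj_def)
  have pe: "proj (emb_low n e) = e" using low_E5[OF e] by simp
  show ?thesis
  proof (cases "p = emb_low n e")
    case True then show ?thesis using pe lrefl[OF e] by simp
  next
    case False then show ?thesis using D unfolding strict_def by simp
  qed
qed

end

context pbwl
begin

lemma menv_superset:
  "finite S \<Longrightarrow> {p. c p \<noteq> 0} \<subseteq> S \<Longrightarrow>
    menv sc x n c = (\<Sum>p\<in>S. sc (c p) * mon x n (fst p) * mon x n (rev (snd p)))"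
  unfolding menv_def by (rule sum.mono_neutral_left) auto

lemma menv_zero[simp]: "menv sc x n (\<lambda>_. 0) = 0"
  unfolding menv_def by simp

lemma envc_finite: "c \<in> envc n \<Longrightarrow> finite {p. c p \<noteq> 0}"
  unfolding envc_def by blast

lemma envc_len: "c \<in> envc n \<Longrightarrow> c p \<noteq> 0 \<Longrightarrow> length (fst p) = n \<and> length (snd p) = n"
  unfolding envc_def by blast

lemma zero_envc: "(\<lambda>_. 0) \<in> envc n"
  unfolding envc_def by simp

lemma menv_sum:
  assumes A: "finite A" and c: "\<And>a. a \<in> A \<Longrightarrow> finite {p. c a p \<noteq> 0}"
  shows "menv sc x n (\<lambda>p. \<Sum>a\<in>A. c a p) = (\<Sum>a\<in>A. menv sc x n (c a))"
proof -
  define S where "S = (\<Union>a\<in>A. {p. c a p \<noteq> 0})"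
  have fS: "finite S" unfolding S_def using A c by blast
  have sub: "{p. (\<Sum>a\<in>A. c a p) \<noteq> 0} \<subseteq> S"
  proof
    fix p assume "p \<in> {p. (\<Sum>a\<in>A. c a p) \<noteq> 0}"
    then obtain a where "a \<in> A" "c a p \<noteq> 0" by (meson mem_Collect_eq sum.neutral)
    then show "p \<in> S" unfolding S_def by blast
  qed
  have "menv sc x n (\<lambda>p. \<Sum>a\<in>A. c a p) = (\<Sum>p\<in>S. sc (\<Sum>a\<in>A. c a p) * mon x n (fst p) * mon x n (rev (snd p)))"
    by (rule menv_superset[OF fS sub])
  also have "\<dots> = (\<Sum>a\<in>A. \<Sum>p\<in>S. sc (c a p) * mon x n (fst p) * mon x n (rev (snd p)))"
    by (subst sum.swap) (simp add: sc_sum sum_distrib_right)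
  also have "\<dots> = (\<Sum>a\<in>A. menv sc x n (c a))"
  proof (rule sum.cong[OF HOL.refl])
    fix a assume "a \<in> A"
    then have "{p. c a p \<noteq> 0} \<subseteq> S" unfolding S_def by blast
    then show "(\<Sum>p\<in>S. sc (c a p) * mon x n (fst p) * mon x n (rev (snd p))) = menv sc x n (c a)"
      using menv_superset[OF fS] by simp
  qed
  finally show ?thesis .
qed

lemma menv_mult:
  assumes c: "c \<in> envc n" and d: "d \<in> envc n"
  shows "menv sc x n (env_mult sc x n c d) =
    (\<Sum>p\<in>{p. c p \<noteq> 0}. sc (c p) * mon x n (fst p) * menv sc x n d * mon x n (rev (snd p)))"
proof -
  define P where "P = {p. c p \<noteq> 0}"
  define Q where "Q = {q. d q \<noteq> 0}"
  have fP: "finite P" and fQ: "finite Q" using c d envc_finite unfolding P_def Q_def by blast+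
  define A where "A = (\<lambda>(p::nat list \<times> nat list) (q::nat list \<times> nat list). mon x n (fst p) * mon x n (fst q))"
  define B where "B = (\<lambda>(p::nat list \<times> nat list) (q::nat list \<times> nat list). mon x n (rev (snd q)) * mon x n (rev (snd p)))"
  define SA where "SA = (\<Union>p\<in>P. \<Union>q\<in>Q. {\<mu>. cf sc x n (A p q) \<mu> \<noteq> 0})"
  define SB where "SB = (\<Union>p\<in>P. \<Union>q\<in>Q. {\<beta>. cf sc x n (B p q) \<beta> \<noteq> 0})"
  have fSA: "finite SA" unfolding SA_def using fP fQ cf_finite by blast
  have fSB: "finite SB" unfolding SB_def using fP fQ cf_finite by blast
  define S where "S = SA \<times> (rev ` SB)"
  have fS: "finite S" unfolding S_def using fSA fSB by simp
  have em: "env_mult sc x n c d = (\<lambda>(\<mu>, \<nu>). \<Sum>p\<in>P. \<Sum>q\<in>Q. c p * d q * cf sc x n (A p q) \<mu> * cf sc x n (B p q) (rev \<nu>))"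
    unfolding env_mult_def P_def Q_def A_def B_def by simp
  have sub: "{m. env_mult sc x n c d m \<noteq> 0} \<subseteq> S"
  proof
    fix m assume "m \<in> {m. env_mult sc x n c d m \<noteq> 0}"
    obtain \<mu> \<nu> where m: "m = (\<mu>, \<nu>)" by (cases m)
    have "(\<Sum>p\<in>P. \<Sum>q\<in>Q. c p * d q * cf sc x n (A p q) \<mu> * cf sc x n (B p q) (rev \<nu>)) \<noteq> 0"
      using \<open>m \<in> _\<close> m em by simp
    then obtain p where p: "p \<in> P" "(\<Sum>q\<in>Q. c p * d q * cf sc x n (A p q) \<mu> * cf sc x n (B p q) (rev \<nu>)) \<noteq> 0"
      by (meson sum.neutral)
    then obtain q where q: "q \<in> Q" "c p * d q * cf sc x n (A p q) \<mu> * cf sc x n (B p q) (rev \<nu>) \<noteq> 0"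
      by (meson sum.neutral)
    have "cf sc x n (A p q) \<mu> \<noteq> 0" "cf sc x n (B p q) (rev \<nu>) \<noteq> 0" using q(2) by auto
    then have "\<mu> \<in> SA" "rev \<nu> \<in> SB" unfolding SA_def SB_def using p(1) q(1) by blast+
    then show "m \<in> S" unfolding S_def m by (simp add: image_iff) (metis rev_rev_ident)
  qed
  have XA: "(\<Sum>\<mu>\<in>SA. sc (cf sc x n (A p q) \<mu>) * mon x n \<mu>) = A p q" if "p \<in> P" "q \<in> Q" for p q
  proof -
    have "{\<mu>. cf sc x n (A p q) \<mu> \<noteq> 0} \<subseteq> SA" unfolding SA_def using that by blast
    then show ?thesis using lin_superset[OF fSA] cf_lin[of "A p q"] by simp
  qed
  have XB: "(\<Sum>\<nu>\<in>rev ` SB. sc (cf sc x n (B p q) (rev \<nu>)) * mon x n (rev \<nu>)) = B p q" if "p \<in> P" "q \<in> Q" for p q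
  proof -
    have "{\<beta>. cf sc x n (B p q) \<beta> \<noteq> 0} \<subseteq> SB" unfolding SB_def using that by blast
    then have "(\<Sum>\<beta>\<in>SB. sc (cf sc x n (B p q) \<beta>) * mon x n \<beta>) = B p q"
      using lin_superset[OF fSB] cf_lin[of "B p q"] by simp
    moreover have "(\<Sum>\<nu>\<in>rev ` SB. sc (cf sc x n (B p q) (rev \<nu>)) * mon x n (rev \<nu>)) = (\<Sum>\<beta>\<in>SB. sc (cf sc x n (B p q) \<beta>) * mon x n \<beta>)"
      by (subst sum.reindex) (auto intro: inj_onI)
    ultimately show ?thesis by simp
  qed
  have "menv sc x n (env_mult sc x n c d) = (\<Sum>m\<in>S. sc (env_mult sc x n c d m) * mon x n (fst m) * mon x n (rev (snd m)))"
    by (rule menv_superset[OF fS sub])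
  also have "\<dots> = (\<Sum>m\<in>S. \<Sum>p\<in>P. \<Sum>q\<in>Q. sc (c p) * sc (d q) *
        ((sc (cf sc x n (A p q) (fst m)) * mon x n (fst m)) * (sc (cf sc x n (B p q) (rev (snd m))) * mon x n (rev (snd m)))))"
  proof (rule sum.cong[OF HOL.refl])
    fix m assume "m \<in> S"
    obtain \<mu> \<nu> where m: "m = (\<mu>, \<nu>)" by (cases m)
    show "sc (env_mult sc x n c d m) * mon x n (fst m) * mon x n (rev (snd m)) = (\<Sum>p\<in>P. \<Sum>q\<in>Q. sc (c p) * sc (d q) *
        ((sc (cf sc x n (A p q) (fst m)) * mon x n (fst m)) * (sc (cf sc x n (B p q) (rev (snd m))) * mon x n (rev (snd m)))))"
    proof -
      have 1: "sc (\<Sum>p\<in>P. \<Sum>q\<in>Q. c p * d q * cf sc x n (A p q) \<mu> * cf sc x n (B p q) (rev \<nu>))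
          = (\<Sum>p\<in>P. \<Sum>q\<in>Q. sc (c p) * sc (d q) * sc (cf sc x n (A p q) \<mu>) * sc (cf sc x n (B p q) (rev \<nu>)))"
        by (simp add: sc_sum sc_mult)
      have 2: "sc (c p) * sc (d q) * sc a * sc b * mon x n \<mu> * mon x n (rev \<nu>)
          = sc (c p) * sc (d q) * (sc a * mon x n \<mu> * (sc b * mon x n (rev \<nu>)))" for p q a b
        by (simp add: mult.assoc sc_comm_mid[of "mon x n \<mu>"])
      show ?thesis unfolding em m using 1 2 by (simp add: sum_distrib_right)
    qed
  qed
  also have "\<dots> = (\<Sum>p\<in>P. \<Sum>q\<in>Q. sc (c p) * sc (d q) * (\<Sum>m\<in>S.
        ((sc (cf sc x n (A p q) (fst m)) * mon x n (fst m)) * (sc (cf sc x n (B p q) (rev (snd m))) * mon x n (rev (snd m))))))"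
    by (simp add: sum_distrib_left sum.swap[of _ S])
  also have "\<dots> = (\<Sum>p\<in>P. \<Sum>q\<in>Q. sc (c p) * sc (d q) * (A p q * B p q))"
  proof (intro sum.cong[OF HOL.refl])
    fix p q assume pq: "p \<in> P" "q \<in> Q"
    have "(\<Sum>m\<in>S. (sc (cf sc x n (A p q) (fst m)) * mon x n (fst m)) * (sc (cf sc x n (B p q) (rev (snd m))) * mon x n (rev (snd m))))
        = (\<Sum>\<mu>\<in>SA. sc (cf sc x n (A p q) \<mu>) * mon x n \<mu>) * (\<Sum>\<nu>\<in>rev ` SB. sc (cf sc x n (B p q) (rev \<nu>)) * mon x n (rev \<nu>))"
      unfolding S_def by (simp add: sum_product sum.cartesian_product case_prod_beta)
    then show "sc (c p) * sc (d q) * (\<Sum>m\<in>S. (sc (cf sc x n (A p q) (fst m)) * mon x n (fst m)) * (sc (cf sc x n (B p q) (rev (snd m))) * mon x n (rev (snd m))))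
        = sc (c p) * sc (d q) * (A p q * B p q)" using XA[OF pq] XB[OF pq] by simp
  qed
  also have "\<dots> = (\<Sum>p\<in>P. sc (c p) * mon x n (fst p) * menv sc x n d * mon x n (rev (snd p)))"
  proof (rule sum.cong[OF HOL.refl])
    fix p assume "p \<in> P"
    show "(\<Sum>q\<in>Q. sc (c p) * sc (d q) * (A p q * B p q)) = sc (c p) * mon x n (fst p) * menv sc x n d * mon x n (rev (snd p))"
      unfolding menv_def Q_def[symmetric] A_def B_def
      by (simp add: sum_distrib_left sum_distrib_right mult.assoc sc_comm_mid[of "mon x n (fst p)"])
  qed
  finally show ?thesis unfolding P_def .
qed

end

lemma addE2_assoc: "addE2 (addE2 a b) c = addE2 a (addE2 b c)"
  by (simp add: addE2_def addE_assoc)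

lemma bispan_zero: "(\<lambda>_. 0) \<in> bispan G"
  unfolding bispan_def by (rule CollectI, rule exI[where x="[]"]) simp

lemma bispan_add:
  assumes "f \<in> bispan G" "g \<in> bispan G"
  shows "(\<lambda>i. f i + g i) \<in> bispan G"
proof -
  obtain ts where ts: "\<forall>t\<in>set ts. fst (snd t) \<in> G" "f = (\<lambda>i. \<Sum>t\<leftarrow>ts. fst t * fst (snd t) i * snd (snd t))"
    using assms(1) unfolding bispan_def by blast
  obtain us where us: "\<forall>t\<in>set us. fst (snd t) \<in> G" "g = (\<lambda>i. \<Sum>t\<leftarrow>us. fst t * fst (snd t) i * snd (snd t))"
    using assms(2) unfolding bispan_def by blast
  show ?thesis unfolding bispan_def
    by (rule CollectI, rule exI[where x="ts @ us"]) (use ts us in auto)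
qed

lemma bispan_gen: "g \<in> G \<Longrightarrow> (\<lambda>i. a * g i * b) \<in> bispan G"
  unfolding bispan_def by (rule CollectI, rule exI[where x="[(a, g, b)]"]) simp

lemma bispan_sum:
  assumes "finite A" "\<And>a. a \<in> A \<Longrightarrow> f a \<in> bispan G"
  shows "(\<lambda>i. \<Sum>a\<in>A. f a i) \<in> bispan G"
  using assms
proof (induction A rule: finite_induct)
  case empty then show ?case using bispan_zero by simp
next
  case (insert a A)
  have "(\<lambda>i. f a i + (\<Sum>a\<in>A. f a i)) \<in> bispan G"
    using insert bispan_add[of "f a" G "\<lambda>i. \<Sum>a\<in>A. f a i"] by simp
  then show ?case using insert by simp
qed

lemma bispan_subset:
  assumes M: "subbimodule s M" and G: "G \<subseteq> M"
  shows "bispan G \<subseteq> M"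
proof
  fix f assume "f \<in> bispan G"
  then obtain ts where ts: "\<forall>t\<in>set ts. fst (snd t) \<in> G" "f = (\<lambda>i. \<Sum>t\<leftarrow>ts. fst t * fst (snd t) i * snd (snd t))"
    unfolding bispan_def by blast
  have M0: "(\<lambda>_. 0) \<in> M" and Madd: "\<And>f g. f \<in> M \<Longrightarrow> g \<in> M \<Longrightarrow> (\<lambda>i. f i + g i) \<in> M"
    and Mmul: "\<And>f a b. f \<in> M \<Longrightarrow> (\<lambda>i. a * f i * b) \<in> M"
    using M unfolding subbimodule_def by blast+
  have "(\<lambda>i. \<Sum>t\<leftarrow>ts. fst t * fst (snd t) i * snd (snd t)) \<in> M" using ts(1)
  proof (induction ts)
    case Nil then show ?case using M0 by simp
  next
    case (Cons t ts)
    have "(\<lambda>i. fst t * fst (snd t) i * snd (snd t)) \<in> M" using Cons.prems G Mmul by auto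
    then show ?case using Cons Madd by simp
  qed
  then show "f \<in> M" using ts(2) by simp
qed

locale embs = pbwl sc x n le for sc :: "'k::field \<Rightarrow> 'r::ring_1" and x n le +
  fixes envord :: "nat list \<times> nat list \<Rightarrow> nat list \<times> nat list \<Rightarrow> bool"
    and emb :: "nat list \<Rightarrow> nat list \<times> nat list"
  assumes E0: "sto (D2 n) envord"
    and E1: "length a = n \<Longrightarrow> length b = n \<Longrightarrow> envord (emb a) (emb b) \<longleftrightarrow> strict le a b"
    and E2: "p \<in> D2 n \<Longrightarrow> length e = n \<Longrightarrow> envord p (emb e) \<or> p = emb e \<Longrightarrow> le (proj p) e \<and> (proj p = e \<longrightarrow> p = emb e)"
    and E3: "length e = n \<Longrightarrow> p \<in> D2 n \<Longrightarrow> d \<in> D2 n \<Longrightarrow> emb e = addE2 p d \<Longrightarrow>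
             \<exists>e0 \<gamma>. length e0 = n \<and> length \<gamma> = n \<and> p = emb e0 \<and> e = addE e0 \<gamma>"
    and E4: "length a = n \<Longrightarrow> length \<gamma> = n \<Longrightarrow> addE2 (emb a) (emb \<gamma>) = emb (addE a \<gamma>)"
    and E5: "length e = n \<Longrightarrow> emb e \<in> D2 n \<and> proj (emb e) = e"
    and E6: "length e = n \<Longrightarrow> mon x n (fst (emb e)) * mon x n (rev (snd (emb e))) = mon x n e"
begin

lemma emb_inj: "length a = n \<Longrightarrow> length b = n \<Longrightarrow> emb a = emb b \<Longrightarrow> a = b"
  using E5 by metis

lemma sto_Oe: "sto (D2 n \<times> UNIV) (modord istop envord)"
  by (rule sto_modord[OF E0])

lemma sto_Or: "sto ({a. length a = n} \<times> UNIV) (modord istop (strict le))"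
  by (rule sto_modord[OF sto_sl])

lemma Oe_emb: "length a = n \<Longrightarrow> length b = n \<Longrightarrow>
   modord istop envord (emb a, i) (emb b, j) \<longleftrightarrow> modord istop (strict le) (a, i) (b, j)"
  unfolding modord_def TOP_def POT_def using E1 emb_inj by auto

definition lift :: "(nat \<Rightarrow> 'r) \<Rightarrow> nat \<Rightarrow> nat list \<times> nat list \<Rightarrow> 'k" where
  "lift f i p = (if p \<in> emb ` {e. length e = n} then cf sc x n (f i) (proj p) else 0)"

lemma cf_zero: "cf sc x n 0 = (\<lambda>_. 0)"
  using cf_lincomb[of "{}" "\<lambda>_. 0" "\<lambda>_. 0"] by simp

lemma lift_supp: "{p. lift f i p \<noteq> 0} = emb ` {e. cf sc x n (f i) e \<noteq> 0}"
proof
  show "{p. lift f i p \<noteq> 0} \<subseteq> emb ` {e. cf sc x n (f i) e \<noteq> 0}"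
  proof
    fix p assume "p \<in> {p. lift f i p \<noteq> 0}"
    then obtain e where e: "length e = n" "p = emb e" "cf sc x n (f i) (proj p) \<noteq> 0"
      unfolding lift_def by (auto split: if_splits)
    then show "p \<in> emb ` {e. cf sc x n (f i) e \<noteq> 0}" using E5 by auto
  qed
next
  show "emb ` {e. cf sc x n (f i) e \<noteq> 0} \<subseteq> {p. lift f i p \<noteq> 0}"
  proof
    fix p assume "p \<in> emb ` {e. cf sc x n (f i) e \<noteq> 0}"
    then obtain e where e: "p = emb e" "cf sc x n (f i) e \<noteq> 0" by blast
    then have l: "length e = n" using cf_len by blast
    then show "p \<in> {p. lift f i p \<noteq> 0}" using e E5[OF l] unfolding lift_def by auto
  qed
qed

lemma lift_envc: "lift f i \<in> envc n"
proof -
  have 1: "finite {p. lift f i p \<noteq> 0}" unfolding lift_supp using cf_finite by blast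
  have 2: "length (fst p) = n \<and> length (snd p) = n" if "lift f i p \<noteq> 0" for p
  proof -
    have "p \<in> emb ` {e. cf sc x n (f i) e \<noteq> 0}" using lift_supp that by blast
    then obtain e where "p = emb e" "length e = n" using cf_len by blast
    then show ?thesis using E5 by simp
  qed
  show ?thesis unfolding envc_def using 1 2 by blast
qed

lemma lift_menv: "menv sc x n (lift f i) = f i"
proof -
  have inj: "inj_on emb {e. cf sc x n (f i) e \<noteq> 0}"
    by (rule inj_onI) (use emb_inj cf_len in blast)
  have "menv sc x n (lift f i) = (\<Sum>p\<in>emb ` {e. cf sc x n (f i) e \<noteq> 0}. sc (lift f i p) * mon x n (fst p) * mon x n (rev (snd p)))"
    unfolding menv_def lift_supp ..
  also have "\<dots> = (\<Sum>e\<in>{e. cf sc x n (f i) e \<noteq> 0}. sc (lift f i (emb e)) * mon x n (fst (emb e)) * mon x n (rev (snd (emb e))))"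
    by (simp add: sum.reindex[OF inj])
  also have "\<dots> = (\<Sum>e\<in>{e. cf sc x n (f i) e \<noteq> 0}. sc (cf sc x n (f i) e) * mon x n e)"
  proof (rule sum.cong[OF HOL.refl])
    fix e assume "e \<in> {e. cf sc x n (f i) e \<noteq> 0}"
    then have l: "length e = n" using cf_len by blast
    have "lift f i (emb e) = cf sc x n (f i) e" unfolding lift_def using E5[OF l] l by auto
    then show "sc (lift f i (emb e)) * mon x n (fst (emb e)) * mon x n (rev (snd (emb e))) = sc (cf sc x n (f i) e) * mon x n e"
      using E6[OF l] by (simp add: mult.assoc)
  qed
  also have "\<dots> = f i" using r_expand[of "f i"] by simp
  finally show ?thesis .
qed

lemma ms_lift: "ms sc x n (lift f) = f"
  unfolding ms_def using lift_menv by auto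

lemma lift_envvecs: "f \<in> vecs s \<Longrightarrow> lift f \<in> envvecs n s"
  unfolding envvecs_def
proof (intro CollectI conjI allI impI)
  fix i show "i < s \<Longrightarrow> lift f i \<in> envc n" by (rule lift_envc)
next
  fix i assume f: "f \<in> vecs s" and i: "s \<le> i"
  then have "f i = 0" unfolding vecs_def by blast
  then show "lift f i = (\<lambda>_. 0)" by (intro ext) (simp add: lift_def cf_zero)
qed

lemma supp_vec_lift: "supp_vec (\<lambda>c. c) s (lift f) = (\<lambda>(e, i). (emb e, i)) ` supp_vec (cf sc x n) s f"
proof
  show "supp_vec (\<lambda>c. c) s (lift f) \<subseteq> (\<lambda>(e, i). (emb e, i)) ` supp_vec (cf sc x n) s f"
  proof
    fix z assume "z \<in> supp_vec (\<lambda>c. c) s (lift f)"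
    then obtain p i where z: "z = (p, i)" "i < s" "lift f i p \<noteq> 0" unfolding supp_vec_def by blast
    then obtain e where "p = emb e" "cf sc x n (f i) e \<noteq> 0" using lift_supp by blast
    then show "z \<in> (\<lambda>(e, i). (emb e, i)) ` supp_vec (cf sc x n) s f" using z unfolding supp_vec_def by force
  qed
next
  show "(\<lambda>(e, i). (emb e, i)) ` supp_vec (cf sc x n) s f \<subseteq> supp_vec (\<lambda>c. c) s (lift f)"
  proof
    fix z assume "z \<in> (\<lambda>(e, i). (emb e, i)) ` supp_vec (cf sc x n) s f"
    then obtain w where w: "w \<in> supp_vec (cf sc x n) s f" "z = (\<lambda>(e, i). (emb e, i)) w" by blast
    obtain e i where wei: "w = (e, i)" by (cases w)
    have z: "z = (emb e, i)" "i < s" "cf sc x n (f i) e \<noteq> 0" using w wei unfolding supp_vec_def by auto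
    then have "lift f i (emb e) \<noteq> 0" using lift_supp by blast
    then show "z \<in> supp_vec (\<lambda>c. c) s (lift f)" using z unfolding supp_vec_def by blast
  qed
qed

lemma supp_vec_fin_r: "finite (supp_vec (cf sc x n) s f)"
proof -
  have "supp_vec (cf sc x n) s f \<subseteq> (\<Union>i<s. (\<lambda>e. (e, i)) ` {e. cf sc x n (f i) e \<noteq> 0})"
    unfolding supp_vec_def by blast
  moreover have "finite (\<Union>i<s. (\<lambda>e. (e, i)) ` {e. cf sc x n (f i) e \<noteq> 0})" using cf_finite by blast
  ultimately show ?thesis by (rule finite_subset)
qed

lemma supp_vec_sub_r: "supp_vec (cf sc x n) s f \<subseteq> {a. length a = n} \<times> UNIV"
  unfolding supp_vec_def using cf_len by blast

lemma supp_vec_ne_r: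
  assumes "f \<in> vecs s" "f \<noteq> (\<lambda>_. 0)"
  shows "supp_vec (cf sc x n) s f \<noteq> {}"
proof -
  obtain i where fi: "f i \<noteq> 0" using assms(2) by blast
  have i: "i < s"
  proof (rule ccontr)
    assume "\<not> i < s"
    then have "f i = 0" using assms(1) unfolding vecs_def by simp
    then show False using fi by simp
  qed
  have "\<exists>e. cf sc x n (f i) e \<noteq> 0"
  proof (rule ccontr)
    assume "\<not> (\<exists>e. cf sc x n (f i) e \<noteq> 0)"
    then have "cf sc x n (f i) = (\<lambda>_. 0)" by auto
    then have "f i = 0" using cf_lin[of "f i"] unfolding lin_def by simp
    then show False using fi by simp
  qed
  then show ?thesis using i unfolding supp_vec_def by blast
qed

lemma supp_vec_fin_e: "F \<in> envvecs n s \<Longrightarrow> finite (supp_vec (\<lambda>c. c) s F)"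
proof -
  assume F: "F \<in> envvecs n s"
  have "supp_vec (\<lambda>c. c) s F \<subseteq> (\<Union>i<s. (\<lambda>e. (e, i)) ` {e. F i e \<noteq> 0})"
    unfolding supp_vec_def by blast
  moreover have "finite (\<Union>i<s. (\<lambda>e. (e, i)) ` {e. F i e \<noteq> 0})"
    using F envc_finite unfolding envvecs_def by blast
  ultimately show ?thesis by (rule finite_subset)
qed

lemma supp_vec_sub_e: "F \<in> envvecs n s \<Longrightarrow> supp_vec (\<lambda>c. c) s F \<subseteq> D2 n \<times> UNIV"
  unfolding supp_vec_def envvecs_def using envc_len by fastforce

lemma supp_vec_ne_e:
  assumes "F \<in> envvecs n s" "F \<noteq> (\<lambda>_ _. 0)"
  shows "supp_vec (\<lambda>c. c) s F \<noteq> {}"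
proof -
  obtain i p where fi: "F i p \<noteq> 0" using assms(2) by blast
  have i: "i < s"
  proof (rule ccontr)
    assume "\<not> i < s"
    then have "F i = (\<lambda>_. 0)" using assms(1) unfolding envvecs_def by simp
    then show False using fi by simp
  qed
  then show ?thesis using fi unfolding supp_vec_def by blast
qed

lemma lead_r:
  assumes "f \<in> vecs s" "f \<noteq> (\<lambda>_. 0)"
  shows "expv (cf sc x n) (modord istop (strict le)) s f \<in> supp_vec (cf sc x n) s f \<and>
    (\<forall>z\<in>supp_vec (cf sc x n) s f. z \<noteq> expv (cf sc x n) (modord istop (strict le)) s f \<longrightarrow>
        modord istop (strict le) z (expv (cf sc x n) (modord istop (strict le)) s f))"
  unfolding expv_def by (rule lead_prop[OF sto_Or supp_vec_fin_r supp_vec_ne_r[OF assms] supp_vec_sub_r])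

lemma lead_e:
  assumes "F \<in> envvecs n s" "F \<noteq> (\<lambda>_ _. 0)"
  shows "expv (\<lambda>c. c) (modord istop envord) s F \<in> supp_vec (\<lambda>c. c) s F \<and>
    (\<forall>z\<in>supp_vec (\<lambda>c. c) s F. z \<noteq> expv (\<lambda>c. c) (modord istop envord) s F \<longrightarrow>
        modord istop envord z (expv (\<lambda>c. c) (modord istop envord) s F))"
  unfolding expv_def by (rule lead_prop[OF sto_Oe supp_vec_fin_e[OF assms(1)] supp_vec_ne_e[OF assms] supp_vec_sub_e[OF assms(1)]])

lemma expv_lift:
  assumes f: "f \<in> vecs s" "f \<noteq> (\<lambda>_. 0)" and ex: "expv (cf sc x n) (modord istop (strict le)) s f = (e, i)"
  shows "expv (\<lambda>c. c) (modord istop envord) s (lift f) = (emb e, i)"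
proof -
  have LL: "(e, i) \<in> supp_vec (cf sc x n) s f \<and>
    (\<forall>z\<in>supp_vec (cf sc x n) s f. z \<noteq> (e, i) \<longrightarrow> modord istop (strict le) z (e, i))"
    using lead_r[where istop=istop, OF f, unfolded ex] .
  note L = conjunct1[OF LL] conjunct2[OF LL]
  have le: "length e = n" using L(1) supp_vec_sub_r by blast
  show ?thesis unfolding expv_def
  proof (rule lead_unique[OF sto_Oe])
    show "supp_vec (\<lambda>c. c) s (lift f) \<subseteq> D2 n \<times> UNIV" by (rule supp_vec_sub_e[OF lift_envvecs[OF f(1)]])
    show "(emb e, i) \<in> supp_vec (\<lambda>c. c) s (lift f)" unfolding supp_vec_lift using L(1) by force
    show "\<forall>z\<in>supp_vec (\<lambda>c. c) s (lift f). z \<noteq> (emb e, i) \<longrightarrow> modord istop envord z (emb e, i)"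
    proof (intro ballI impI)
      fix z assume "z \<in> supp_vec (\<lambda>c. c) s (lift f)" "z \<noteq> (emb e, i)"
      then obtain w where w: "w \<in> supp_vec (cf sc x n) s f" "z = (\<lambda>(e, i). (emb e, i)) w"
        unfolding supp_vec_lift by blast
      obtain e' i' where wei: "w = (e', i')" by (cases w)
      have z: "z = (emb e', i')" "(e', i') \<in> supp_vec (cf sc x n) s f" using w wei by auto
      have le': "length e' = n" using z(2) supp_vec_sub_r by blast
      have "(e', i') \<noteq> (e, i)" using z \<open>z \<noteq> (emb e, i)\<close> by auto
      then have "modord istop (strict le) (e', i') (e, i)" using L(2) z(2) by blast
      then show "modord istop envord z (emb e, i)" using Oe_emb[OF le' le] z(1) by simp
    qed
  qed
qed

lemma lift_nz: "f \<in> vecs s \<Longrightarrow> f \<noteq> (\<lambda>_. 0) \<Longrightarrow> lift f \<noteq> (\<lambda>_ _. 0)"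
  using ms_lift[of f] unfolding ms_def by auto

lemma cf_menv: "c \<in> envc n \<Longrightarrow>
  cf sc x n (menv sc x n c) = (\<lambda>\<gamma>. \<Sum>p\<in>{p. c p \<noteq> 0}. c p * cf sc x n (mon x n (fst p) * mon x n (rev (snd p))) \<gamma>)"
proof -
  assume c: "c \<in> envc n"
  have "menv sc x n c = (\<Sum>p\<in>{p. c p \<noteq> 0}. sc (c p) * (mon x n (fst p) * mon x n (rev (snd p))))"
    unfolding menv_def by (simp add: mult.assoc)
  then show ?thesis using cf_lincomb[OF envc_finite[OF c]] by simp
qed

lemma factA:
  assumes p: "p \<in> D2 n" and e0: "length e0 = n" and g: "length \<gamma> = n" and gp: "le \<gamma> (proj p)"
    and o: "(p, j) = (emb e0, i0) \<or> modord istop envord (p, j) (emb e0, i0)"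
  shows "(\<gamma>, j) = (e0, i0) \<or> modord istop (strict le) (\<gamma>, j) (e0, i0)"
proof -
  have lp: "length (proj p) = n" using p by (simp add: proj_def)
  show ?thesis
  proof (cases istop)
    case True
    then have o': "envord p (emb e0) \<or> (p = emb e0 \<and> i0 \<le> j)" using o unfolding modord_def TOP_def by auto
    then have "envord p (emb e0) \<or> p = emb e0" by blast
    then have pe: "le (proj p) e0" "proj p = e0 \<longrightarrow> p = emb e0" using E2[OF p e0] by blast+
    have ge: "le \<gamma> e0" using ltrans[OF g lp e0 gp pe(1)] .
    show ?thesis
    proof (cases "\<gamma> = e0")
      case True
      then have "proj p = e0" using lantisym[OF lp e0 pe(1)] gp by simp
      then have "p = emb e0" using pe(2) by simp
      then have "\<not> envord p (emb e0)" using E1[OF e0 e0] unfolding strict_def by simp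
      then have "i0 \<le> j" using o' by blast
      then show ?thesis using \<open>istop\<close> True unfolding modord_def TOP_def by auto
    next
      case False
      then show ?thesis using \<open>istop\<close> ge unfolding modord_def TOP_def strict_def by auto
    qed
  next
    case False
    then have o': "i0 < j \<or> (j = i0 \<and> (envord p (emb e0) \<or> p = emb e0))" using o unfolding modord_def POT_def by auto
    show ?thesis
    proof (cases "i0 < j")
      case True then show ?thesis using \<open>\<not> istop\<close> unfolding modord_def POT_def by auto
    next
      case False
      then have j: "j = i0" and "envord p (emb e0) \<or> p = emb e0" using o' by auto
      then have pe: "le (proj p) e0" using E2[OF p e0] by blast
      have ge: "le \<gamma> e0" using ltrans[OF g lp e0 gp pe] .
      show ?thesis using \<open>\<not> istop\<close> ge j unfolding modord_def POT_def strict_def by auto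
    qed
  qed
qed

lemma KL:
  assumes F: "F \<in> envvecs n s" "F \<noteq> (\<lambda>_ _. 0)" and e0: "length e0 = n"
    and ex: "expv (\<lambda>c. c) (modord istop envord) s F = (emb e0, i0)"
  shows "expv (cf sc x n) (modord istop (strict le)) s (ms sc x n F) = (e0, i0) \<and> ms sc x n F \<noteq> (\<lambda>_. 0)"
proof -
  have LL: "(emb e0, i0) \<in> supp_vec (\<lambda>c. c) s F \<and>
    (\<forall>z\<in>supp_vec (\<lambda>c. c) s F. z \<noteq> (emb e0, i0) \<longrightarrow> modord istop envord z (emb e0, i0))"
    using lead_e[where istop=istop, OF F, unfolded ex] .
  note L = conjunct1[OF LL] conjunct2[OF LL]
  have i0: "i0 < s" and Fe: "F i0 (emb e0) \<noteq> 0" using L(1) unfolding supp_vec_def by auto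
  have Fenv: "F j \<in> envc n" for j
  proof (cases "j < s")
    case True then show ?thesis using F(1) unfolding envvecs_def by blast
  next
    case False then have "F j = (\<lambda>_. 0)" using F(1) unfolding envvecs_def by auto
    then show ?thesis using zero_envc by simp
  qed
  have cfms: "cf sc x n (ms sc x n F j) \<gamma> = (\<Sum>p\<in>{p. F j p \<noteq> 0}. F j p * cf sc x n (mon x n (fst p) * mon x n (rev (snd p))) \<gamma>)" for j \<gamma>
    unfolding ms_def using cf_menv[OF Fenv[of j]] by simp
  have inS: "p \<in> {p. F j p \<noteq> 0} \<Longrightarrow> j < s \<Longrightarrow> (p, j) \<in> supp_vec (\<lambda>c. c) s F" for p j
    unfolding supp_vec_def by simp
  have pD: "F j p \<noteq> 0 \<Longrightarrow> p \<in> D2 n" for j p using envc_len[OF Fenv] by simp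
  have cfprod: "cf sc x n (mon x n (fst p) * mon x n (rev (snd p))) \<gamma> \<noteq> 0 \<Longrightarrow> p \<in> D2 n \<Longrightarrow> le \<gamma> (proj p)" for p \<gamma>
    unfolding proj_def by (rule pbw_prod_cf) auto
  have c0: "cf sc x n (ms sc x n F i0) e0 = F i0 (emb e0)"
  proof -
    let ?g = "\<lambda>p. F i0 p * cf sc x n (mon x n (fst p) * mon x n (rev (snd p))) e0"
    have fin: "finite {p. F i0 p \<noteq> 0}" using envc_finite[OF Fenv] .
    have mem: "emb e0 \<in> {p. F i0 p \<noteq> 0}" using Fe by simp
    have g0: "?g (emb e0) = F i0 (emb e0)" using E6[OF e0] cf_mon[OF e0] by simp
    have rest: "?g p = 0" if pS: "p \<in> {p. F i0 p \<noteq> 0} - {emb e0}" for p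
    proof (rule ccontr)
      assume nz: "?g p \<noteq> 0"
      have pd: "p \<in> D2 n" using pS pD by blast
      have "(p, i0) \<in> supp_vec (\<lambda>c. c) s F" using pS i0 inS by blast
      then have "modord istop envord (p, i0) (emb e0, i0)" using L(2) pS by blast
      then have "envord p (emb e0)" unfolding modord_def TOP_def POT_def by (auto split: if_splits)
      then have pe: "le (proj p) e0" "proj p = e0 \<longrightarrow> p = emb e0" using E2[OF pd e0] by blast+
      have "le e0 (proj p)" using cfprod[OF _ pd] nz by auto
      then have "proj p = e0" using lantisym[OF _ e0 pe(1)] pd by (simp add: proj_def)
      then show False using pe(2) pS by simp
    qed
    have "cf sc x n (ms sc x n F i0) e0 = ?g (emb e0) + (\<Sum>p\<in>{p. F i0 p \<noteq> 0} - {emb e0}. ?g p)"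
      unfolding cfms by (rule sum.remove[OF fin mem])
    also have "\<dots> = F i0 (emb e0)" using g0 rest by simp
    finally show ?thesis .
  qed
  have S0: "(e0, i0) \<in> supp_vec (cf sc x n) s (ms sc x n F)" using c0 Fe i0 unfolding supp_vec_def by simp
  have maxS: "\<forall>z\<in>supp_vec (cf sc x n) s (ms sc x n F). z \<noteq> (e0, i0) \<longrightarrow> modord istop (strict le) z (e0, i0)"
  proof (intro ballI impI)
    fix z assume zS: "z \<in> supp_vec (cf sc x n) s (ms sc x n F)" and zne: "z \<noteq> (e0, i0)"
    then obtain \<gamma> j where z: "z = (\<gamma>, j)" "j < s" "cf sc x n (ms sc x n F j) \<gamma> \<noteq> 0" unfolding supp_vec_def by blast
    have lg: "length \<gamma> = n" using z(3) cf_len by blast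
    obtain p where p: "p \<in> {p. F j p \<noteq> 0}" "F j p * cf sc x n (mon x n (fst p) * mon x n (rev (snd p))) \<gamma> \<noteq> 0"
      using z(3) unfolding cfms by (meson sum.neutral)
    have pd: "p \<in> D2 n" using p(1) pD by blast
    have gp: "le \<gamma> (proj p)" using cfprod[OF _ pd] p(2) by auto
    have "(p, j) \<in> supp_vec (\<lambda>c. c) s F" using inS p(1) z(2) by blast
    then have "(p, j) = (emb e0, i0) \<or> modord istop envord (p, j) (emb e0, i0)" using L(2) by blast
    then have "(\<gamma>, j) = (e0, i0) \<or> modord istop (strict le) (\<gamma>, j) (e0, i0)" by (rule factA[OF pd e0 lg gp])
    then show "modord istop (strict le) z (e0, i0)" using z(1) zne by blast
  qed
  have "expv (cf sc x n) (modord istop (strict le)) s (ms sc x n F) = (e0, i0)"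
    unfolding expv_def by (rule lead_unique[OF sto_Or supp_vec_sub_r S0 maxS])
  moreover have "ms sc x n F \<noteq> (\<lambda>_. 0)"
  proof
    assume "ms sc x n F = (\<lambda>_. 0)"
    then have "cf sc x n (ms sc x n F i0) e0 = 0" using cf_zero by simp
    then show False using c0 Fe by simp
  qed
  ultimately show ?thesis by blast
qed

end

context pbwl
begin

lemma env_mult_fin:
  assumes c: "c \<in> envc n" and d: "d \<in> envc n"
  shows "finite {m. env_mult sc x n c d m \<noteq> 0}"
proof -
  define P where "P = {p. c p \<noteq> 0}"
  define Q where "Q = {q. d q \<noteq> 0}"
  have fP: "finite P" and fQ: "finite Q" using c d envc_finite unfolding P_def Q_def by blast+
  define A where "A = (\<lambda>(p::nat list \<times> nat list) (q::nat list \<times> nat list). mon x n (fst p) * mon x n (fst q))"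
  define B where "B = (\<lambda>(p::nat list \<times> nat list) (q::nat list \<times> nat list). mon x n (rev (snd q)) * mon x n (rev (snd p)))"
  define SA where "SA = (\<Union>p\<in>P. \<Union>q\<in>Q. {\<mu>. cf sc x n (A p q) \<mu> \<noteq> 0})"
  define SB where "SB = (\<Union>p\<in>P. \<Union>q\<in>Q. {\<beta>. cf sc x n (B p q) \<beta> \<noteq> 0})"
  have fSA: "finite SA" unfolding SA_def using fP fQ cf_finite by blast
  have fSB: "finite SB" unfolding SB_def using fP fQ cf_finite by blast
  define S where "S = SA \<times> (rev ` SB)"
  have fS: "finite S" unfolding S_def using fSA fSB by simp
  have em: "env_mult sc x n c d = (\<lambda>(\<mu>, \<nu>). \<Sum>p\<in>P. \<Sum>q\<in>Q. c p * d q * cf sc x n (A p q) \<mu> * cf sc x n (B p q) (rev \<nu>))"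
    unfolding env_mult_def P_def Q_def A_def B_def by simp
  have sub: "{m. env_mult sc x n c d m \<noteq> 0} \<subseteq> S"
  proof
    fix m assume "m \<in> {m. env_mult sc x n c d m \<noteq> 0}"
    obtain \<mu> \<nu> where m: "m = (\<mu>, \<nu>)" by (cases m)
    have "(\<Sum>p\<in>P. \<Sum>q\<in>Q. c p * d q * cf sc x n (A p q) \<mu> * cf sc x n (B p q) (rev \<nu>)) \<noteq> 0"
      using \<open>m \<in> _\<close> m em by simp
    then obtain p where p: "p \<in> P" "(\<Sum>q\<in>Q. c p * d q * cf sc x n (A p q) \<mu> * cf sc x n (B p q) (rev \<nu>)) \<noteq> 0"
      by (meson sum.neutral)
    then obtain q where q: "q \<in> Q" "c p * d q * cf sc x n (A p q) \<mu> * cf sc x n (B p q) (rev \<nu>) \<noteq> 0"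
      by (meson sum.neutral)
    have "cf sc x n (A p q) \<mu> \<noteq> 0" "cf sc x n (B p q) (rev \<nu>) \<noteq> 0" using q(2) by auto
    then have "\<mu> \<in> SA" "rev \<nu> \<in> SB" unfolding SA_def SB_def using p(1) q(1) by blast+
    then show "m \<in> S" unfolding S_def m by (simp add: image_iff) (metis rev_rev_ident)
  qed
  show ?thesis using finite_subset[OF sub fS] .
qed

end

context embs
begin

theorem embs_main:
  assumes M: "subbimodule s M" and LG: "left_gb sc x n s (modord istop envord) (NM sc x n s M) G"
  shows "two_sided_gb sc x n s (modord istop (strict le)) M (ms sc x n ` G - {\<lambda>_. 0})"
proof -
  let ?Oe = "modord istop envord" and ?Or = "modord istop (strict le)" and ?G' = "ms sc x n ` G - {\<lambda>_. 0}"
  have finG: "finite G" and GN: "G \<subseteq> NM sc x n s M - {\<lambda>_ _. 0}" and span: "NM sc x n s M = lspan sc x n G"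
    and EXP: "ExpSet (\<lambda>c. c) ?Oe s (\<lambda>_ _. 0) (NM sc x n s M) =
       (\<Union>g\<in>G. cone addE2 (Ex n \<times> Ex n) (expv (\<lambda>c. c) ?Oe s g))"
    using LG unfolding left_gb_def by blast+
  have Mvec: "M \<subseteq> vecs s" using M unfolding subbimodule_def by blast
  have NMenv: "F \<in> NM sc x n s M \<Longrightarrow> F \<in> envvecs n s" for F unfolding NM_def by blast
  have NMM: "F \<in> NM sc x n s M \<Longrightarrow> ms sc x n F \<in> M" for F unfolding NM_def by blast
  have liftNM: "f \<in> M \<Longrightarrow> lift f \<in> NM sc x n s M" for f
    unfolding NM_def using lift_envvecs Mvec ms_lift by auto
  have msvec: "F \<in> envvecs n s \<Longrightarrow> ms sc x n F \<in> vecs s" for F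
    unfolding envvecs_def vecs_def ms_def by auto
  have envall: "F \<in> envvecs n s \<Longrightarrow> F i \<in> envc n" for F i
    unfolding envvecs_def using zero_envc by (cases "i < s") auto
  have EXPin: "(P, j) \<in> ExpSet (\<lambda>c. c) ?Oe s (\<lambda>_ _. 0) (NM sc x n s M) \<longleftrightarrow>
      (\<exists>g\<in>G. \<exists>\<delta>. fst \<delta> \<in> Ex n \<and> snd \<delta> \<in> Ex n \<and> P = addE2 (fst (expv (\<lambda>c. c) ?Oe s g)) \<delta> \<and> j = snd (expv (\<lambda>c. c) ?Oe s g))" for P j
    unfolding EXP cone_def by (auto simp: mem_Times_iff)
  have inExpNM: "F \<in> NM sc x n s M \<Longrightarrow> F \<noteq> (\<lambda>_ _. 0) \<Longrightarrow> expv (\<lambda>c. c) ?Oe s F \<in> ExpSet (\<lambda>c. c) ?Oe s (\<lambda>_ _. 0) (NM sc x n s M)" for F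
    unfolding ExpSet_def by blast
  have gprops: "g \<in> envvecs n s \<and> g \<noteq> (\<lambda>_ _. 0) \<and> fst (expv (\<lambda>c. c) ?Oe s g) \<in> D2 n" if "g \<in> G" for g
  proof -
    have g: "g \<in> envvecs n s" "g \<noteq> (\<lambda>_ _. 0)" using GN that NMenv by auto
    have "expv (\<lambda>c. c) ?Oe s g \<in> supp_vec (\<lambda>c. c) s g" using lead_e[OF g] by blast
    then have "expv (\<lambda>c. c) ?Oe s g \<in> D2 n \<times> UNIV" using supp_vec_sub_e[OF g(1)] by blast
    then show ?thesis using g by (simp add: mem_Times_iff)
  qed
  have p1: "finite ?G'" using finG by simp
  have p2: "?G' \<subseteq> M - {\<lambda>_. 0}" using GN NMM by auto
  have p3: "M = bispan ?G'"
  proof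
    show "bispan ?G' \<subseteq> M" by (rule bispan_subset[OF M]) (use p2 in blast)
  next
    show "M \<subseteq> bispan ?G'"
    proof
      fix f assume fM: "f \<in> M"
      have "lift f \<in> lspan sc x n G" using liftNM[OF fM] span by simp
      then obtain h where h: "\<forall>g\<in>G. h g \<in> envc n"
        and lf: "lift f = (\<lambda>i p. \<Sum>g\<in>G. env_mult sc x n (h g) (g i) p)" unfolding lspan_def by blast
      have gi: "g \<in> G \<Longrightarrow> g i \<in> envc n" for g i using gprops envall by blast
      have fi: "f i = (\<Sum>g\<in>G. \<Sum>p\<in>{p. h g p \<noteq> 0}. sc (h g p) * mon x n (fst p) * ms sc x n g i * mon x n (rev (snd p)))" for i
      proof -
        have "f i = menv sc x n (lift f i)" using lift_menv by simp
        also have "\<dots> = menv sc x n (\<lambda>p. \<Sum>g\<in>G. env_mult sc x n (h g) (g i) p)" using lf by simp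
        also have "\<dots> = (\<Sum>g\<in>G. menv sc x n (env_mult sc x n (h g) (g i)))"
          by (rule menv_sum[OF finG]) (use env_mult_fin h gi in blast)
        also have "\<dots> = (\<Sum>g\<in>G. \<Sum>p\<in>{p. h g p \<noteq> 0}. sc (h g p) * mon x n (fst p) * ms sc x n g i * mon x n (rev (snd p)))"
          by (rule sum.cong[OF HOL.refl]) (use menv_mult h gi in \<open>simp add: ms_def\<close>)
        finally show ?thesis .
      qed
      have T: "(\<lambda>i. \<Sum>p\<in>{p. h g p \<noteq> 0}. sc (h g p) * mon x n (fst p) * ms sc x n g i * mon x n (rev (snd p))) \<in> bispan ?G'"
        if gG: "g \<in> G" for g
      proof (rule bispan_sum)
        show "finite {p. h g p \<noteq> 0}" using h gG envc_finite by blast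
      next
        fix p
        show "(\<lambda>i. sc (h g p) * mon x n (fst p) * ms sc x n g i * mon x n (rev (snd p))) \<in> bispan ?G'"
        proof (cases "ms sc x n g = (\<lambda>_. 0)")
          case True then show ?thesis using bispan_zero by simp
        next
          case False
          then have "ms sc x n g \<in> ?G'" using gG by blast
          then show ?thesis by (rule bispan_gen)
        qed
      qed
      have "(\<lambda>i. \<Sum>g\<in>G. \<Sum>p\<in>{p. h g p \<noteq> 0}. sc (h g p) * mon x n (fst p) * ms sc x n g i * mon x n (rev (snd p))) \<in> bispan ?G'"
        by (rule bispan_sum[OF finG T])
      moreover have "f = (\<lambda>i. \<Sum>g\<in>G. \<Sum>p\<in>{p. h g p \<noteq> 0}. sc (h g p) * mon x n (fst p) * ms sc x n g i * mon x n (rev (snd p)))"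
        using fi by auto
      ultimately show "f \<in> bispan ?G'" by simp
    qed
  qed
  have p4: "ExpSet (cf sc x n) ?Or s (\<lambda>_. 0) M = (\<Union>g\<in>?G'. cone addE (Ex n) (expv (cf sc x n) ?Or s g))"
  proof
    show "ExpSet (cf sc x n) ?Or s (\<lambda>_. 0) M \<subseteq> (\<Union>g\<in>?G'. cone addE (Ex n) (expv (cf sc x n) ?Or s g))"
    proof
      fix z assume "z \<in> ExpSet (cf sc x n) ?Or s (\<lambda>_. 0) M"
      then obtain f where f: "f \<in> M" "f \<noteq> (\<lambda>_. 0)" "z = expv (cf sc x n) ?Or s f" unfolding ExpSet_def by blast
      obtain e i where z: "z = (e, i)" by (cases z)
      have fv: "f \<in> vecs s" using f Mvec by blast
      have ex: "expv (cf sc x n) ?Or s f = (e, i)" using f z by simp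
      have "(e, i) \<in> supp_vec (cf sc x n) s f" using lead_r[where istop=istop, OF fv f(2)] ex by simp
      then have le: "length e = n" using supp_vec_sub_r by blast
      have lnz: "lift f \<noteq> (\<lambda>_ _. 0)" by (rule lift_nz[OF fv f(2)])
      have "(emb e, i) \<in> ExpSet (\<lambda>c. c) ?Oe s (\<lambda>_ _. 0) (NM sc x n s M)"
        using inExpNM[OF liftNM[OF f(1)] lnz] expv_lift[OF fv f(2) ex] by simp
      then obtain g \<delta> where g: "g \<in> G" "fst \<delta> \<in> Ex n" "snd \<delta> \<in> Ex n"
          "emb e = addE2 (fst (expv (\<lambda>c. c) ?Oe s g)) \<delta>" "i = snd (expv (\<lambda>c. c) ?Oe s g)"
        unfolding EXPin by blast
      have gp: "g \<in> envvecs n s" "g \<noteq> (\<lambda>_ _. 0)" "fst (expv (\<lambda>c. c) ?Oe s g) \<in> D2 n" using gprops[OF g(1)] by auto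
      have dD: "\<delta> \<in> D2 n" using g(2,3) by simp
      obtain e0 \<gamma> where eg: "length e0 = n" "length \<gamma> = n" "fst (expv (\<lambda>c. c) ?Oe s g) = emb e0" "e = addE e0 \<gamma>"
        using E3[OF le gp(3) dD g(4)] by blast
      have exg: "expv (\<lambda>c. c) ?Oe s g = (emb e0, i)" using eg(3) g(5) by (metis prod.collapse)
      have K: "expv (cf sc x n) ?Or s (ms sc x n g) = (e0, i) \<and> ms sc x n g \<noteq> (\<lambda>_. 0)"
        by (rule KL[OF gp(1) gp(2) eg(1) exg])
      then have g': "ms sc x n g \<in> ?G'" using g(1) by blast
      have "z \<in> cone addE (Ex n) (expv (cf sc x n) ?Or s (ms sc x n g))"
        unfolding cone_def using K z eg(2) eg(4) by auto
      then show "z \<in> (\<Union>g\<in>?G'. cone addE (Ex n) (expv (cf sc x n) ?Or s g))" using g' by blast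
    qed
  next
    show "(\<Union>g\<in>?G'. cone addE (Ex n) (expv (cf sc x n) ?Or s g)) \<subseteq> ExpSet (cf sc x n) ?Or s (\<lambda>_. 0) M"
    proof
      fix z assume "z \<in> (\<Union>g\<in>?G'. cone addE (Ex n) (expv (cf sc x n) ?Or s g))"
      then obtain g \<gamma> where g: "g \<in> G" "ms sc x n g \<noteq> (\<lambda>_. 0)" "\<gamma> \<in> Ex n"
          "z = (addE (fst (expv (cf sc x n) ?Or s (ms sc x n g))) \<gamma>, snd (expv (cf sc x n) ?Or s (ms sc x n g)))"
        unfolding cone_def by blast
      obtain e i where ei: "expv (cf sc x n) ?Or s (ms sc x n g) = (e, i)" by (cases "expv (cf sc x n) ?Or s (ms sc x n g)")
      have gN: "g \<in> NM sc x n s M" using GN g(1) by blast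
      have mgM: "ms sc x n g \<in> M" using NMM[OF gN] .
      have mgv: "ms sc x n g \<in> vecs s" using Mvec mgM by blast
      have "(e, i) \<in> supp_vec (cf sc x n) s (ms sc x n g)" using lead_r[where istop=istop, OF mgv g(2)] ei by simp
      then have le: "length e = n" using supp_vec_sub_r by blast
      have lg: "length \<gamma> = n" using g(3) by simp
      have lnz: "lift (ms sc x n g) \<noteq> (\<lambda>_ _. 0)" by (rule lift_nz[OF mgv g(2)])
      have "(emb e, i) \<in> ExpSet (\<lambda>c. c) ?Oe s (\<lambda>_ _. 0) (NM sc x n s M)"
        using inExpNM[OF liftNM[OF mgM] lnz] expv_lift[OF mgv g(2) ei] by simp
      then obtain g2 \<delta> where g2: "g2 \<in> G" "fst \<delta> \<in> Ex n" "snd \<delta> \<in> Ex n"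
          "emb e = addE2 (fst (expv (\<lambda>c. c) ?Oe s g2)) \<delta>" "i = snd (expv (\<lambda>c. c) ?Oe s g2)"
        unfolding EXPin by blast
      have eD: "emb \<gamma> \<in> D2 n" using E5[OF lg] by blast
      define \<delta>' where "\<delta>' = addE2 \<delta> (emb \<gamma>)"
      have d': "fst \<delta>' \<in> Ex n" "snd \<delta>' \<in> Ex n" using g2(2,3) eD unfolding \<delta>'_def addE2_def by auto
      have "emb (addE e \<gamma>) = addE2 (emb e) (emb \<gamma>)" using E4[OF le lg] by simp
      also have "\<dots> = addE2 (fst (expv (\<lambda>c. c) ?Oe s g2)) \<delta>'" unfolding \<delta>'_def g2(4) by (rule addE2_assoc)
      finally have "(emb (addE e \<gamma>), i) \<in> ExpSet (\<lambda>c. c) ?Oe s (\<lambda>_ _. 0) (NM sc x n s M)"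
        unfolding EXPin using g2(1) g2(5) d' by blast
      then have "\<exists>F. (emb (addE e \<gamma>), i) = expv (\<lambda>c. c) ?Oe s F \<and> F \<in> NM sc x n s M \<and> F \<noteq> (\<lambda>_ _. 0)"
        unfolding ExpSet_def by (simp only: mem_Collect_eq)
      then obtain F where F0: "(emb (addE e \<gamma>), i) = expv (\<lambda>c. c) ?Oe s F" "F \<in> NM sc x n s M" "F \<noteq> (\<lambda>_ _. 0)"
        by blast
      note F = F0(2) F0(3) F0(1)[symmetric]
      have lea: "length (addE e \<gamma>) = n" using le lg by simp
      have K: "expv (cf sc x n) ?Or s (ms sc x n F) = (addE e \<gamma>, i) \<and> ms sc x n F \<noteq> (\<lambda>_. 0)"
        by (rule KL[OF NMenv[OF F(1)] F(2) lea F(3)])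
      have "z = (addE e \<gamma>, i)" using g(4) ei by simp
      then show "z \<in> ExpSet (cf sc x n) ?Or s (\<lambda>_. 0) M"
        unfolding ExpSet_def using K NMM[OF F(1)] by force
    qed
  qed
  show ?thesis unfolding two_sided_gb_def using p1 p2 p3 p4 by blast
qed

end

lemma adm_of_pbw: "pbw sc x n le \<Longrightarrow> adm n le"
  unfolding pbw_def adm_def by blast

lemma pbwl_of_pbw: "pbw sc x n le \<Longrightarrow> pbwl sc x n le"
  by (rule pbwl.intro[OF adm_of_pbw]) (simp_all add: pbwl_axioms_def)

lemma embs_su: assumes "pbw sc x n le" shows "embs sc x n le (ord_star_up (strict le)) (emb_up n)"
proof -
  interpret adm n le by (rule adm_of_pbw[OF assms])
  show ?thesis
    apply (rule embs.intro[OF pbwl_of_pbw[OF assms]])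
    apply (rule embs_axioms.intro)
    apply (rule su_E0)
    apply (rule su_E1; assumption)
    apply (rule su_E2; assumption)
    apply (rule up_E3; assumption)
    apply (rule up_E4; assumption)
    apply (rule up_E5; assumption)
    apply (rule up_E6; assumption)
    done
qed

lemma embs_sl: assumes "pbw sc x n le" shows "embs sc x n le (ord_star_low (strict le)) (emb_low n)"
proof -
  interpret adm n le by (rule adm_of_pbw[OF assms])
  show ?thesis
    apply (rule embs.intro[OF pbwl_of_pbw[OF assms]])
    apply (rule embs_axioms.intro)
    apply (rule sl_E0)
    apply (rule sl_E1; assumption)
    apply (rule sl_E2; assumption)
    apply (rule low_E3; assumption)
    apply (rule low_E4; assumption)
    apply (rule low_E5; assumption)
    apply (rule low_E6; assumption)
    done
qed


lemma embs_cu: assumes "pbw sc x n le" shows "embs sc x n le (ord_c_up (strict le)) (emb_up n)"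
proof -
  interpret adm n le by (rule adm_of_pbw[OF assms])
  show ?thesis
    apply (rule embs.intro[OF pbwl_of_pbw[OF assms]])
    apply (rule embs_axioms.intro)
    apply (rule cu_E0)
    apply (rule cu_E1; assumption)
    apply (rule cu_E2; assumption)
    apply (rule up_E3; assumption)
    apply (rule up_E4; assumption)
    apply (rule up_E5; assumption)
    apply (rule up_E6; assumption)
    done
qed


lemma embs_cl: assumes "pbw sc x n le" shows "embs sc x n le (ord_c_low (strict le)) (emb_low n)"
proof -
  interpret adm n le by (rule adm_of_pbw[OF assms])
  show ?thesis
    apply (rule embs.intro[OF pbwl_of_pbw[OF assms]])
    apply (rule embs_axioms.intro)
    apply (rule cl_E0)
    apply (rule cl_E1; assumption)
    apply (rule cl_E2; assumption)
    apply (rule low_E3; assumption)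
    apply (rule low_E4; assumption)
    apply (rule low_E5; assumption)
    apply (rule low_E6; assumption)
    done
qed


theorem mainTheorem6:
  fixes sc :: "'k::field \<Rightarrow> 'r::ring_1" and x :: "nat \<Rightarrow> 'r" and n s :: nat
    and le :: "nat list \<Rightarrow> nat list \<Rightarrow> bool"
    and M :: "(nat \<Rightarrow> 'r) set"
    and G :: "(nat \<Rightarrow> (nat list \<times> nat list \<Rightarrow> 'k)) set"
    and envord :: "nat list \<times> nat list \<Rightarrow> nat list \<times> nat list \<Rightarrow> bool"
    and istop :: bool
  assumes "pbw sc x n le"
    and "subbimodule s M"
    and "envord \<in> {ord_star_up (strict le), ord_c_up (strict le),
                   ord_star_low (strict le), ord_c_low (strict le)}"
    and "left_gb sc x n s (modord istop envord) (NM sc x n s M) G"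
  shows "two_sided_gb sc x n s (modord istop (strict le)) M (ms sc x n ` G - {\<lambda>_. 0})"
proof -
  consider "envord = ord_star_up (strict le)" | "envord = ord_c_up (strict le)"
    | "envord = ord_star_low (strict le)" | "envord = ord_c_low (strict le)"
    using assms(3) by blast
  then show ?thesis
  proof cases
    case 1
    have L: "left_gb sc x n s (modord istop (ord_star_up (strict le))) (NM sc x n s M) G" using assms(4) 1 by simp
    show ?thesis by (rule embs.embs_main[OF embs_su[OF assms(1)] assms(2) L])
  next
    case 2
    have L: "left_gb sc x n s (modord istop (ord_c_up (strict le))) (NM sc x n s M) G" using assms(4) 2 by simp
    show ?thesis by (rule embs.embs_main[OF embs_cu[OF assms(1)] assms(2) L])
  next
    case 3
    have L: "left_gb sc x n s (modord istop (ord_star_low (strict le))) (NM sc x n s M) G" using assms(4) 3 by simp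
    show ?thesis by (rule embs.embs_main[OF embs_sl[OF assms(1)] assms(2) L])
  next
    case 4
    have L: "left_gb sc x n s (modord istop (ord_c_low (strict le))) (NM sc x n s M) G" using assms(4) 4 by simp
    show ?thesis by (rule embs.embs_main[OF embs_cl[OF assms(1)] assms(2) L])
  qed
qed

end
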